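(* Let $l_0\in\mathbb N$, let $v_1\neq v_2$ be positive integers and let $G_0\in\mathcal C_{\{v_1,v_2\},2l_0}$ be the circuit multigraph with route $(v_1,v_2,v_1,v_2,\dots,v_1,v_2)$ of length $2l_0$. Let $B',W'\subset\mathbb N$ be finite sets such that $\{v_1,v_2\}$, $B'$, $W'$ are pairwise disjoint, put $b'=\#B'$, $w'=\#W'$, $l'=b'+w'$, $V'=B'\sqcup W'$, and assume $v_1,v_2$ are larger than every element of $V'$. Then $$\#\{G\in\mathcal C_{\{v_1,v_2\}\sqcup V',\,2l_0+2l'}\mid \operatorname S(G)=G_0,\ B(G)\cap V'=B'\}=\frac{(l_0+b'+w')!^2}{(l_0+b')!\,(l_0+w')!}.$$ Moreover, the same count holds if $G_0$ is replaced by any circuit multigraph $G_0\in\mathcal C_{V_0,2l_0}$ without balanced leaves on a finite vertex set $V_0\subset\mathbb N$ disjoint from $V'$ (and then with $\{v_1,v_2\}$ replaced by $V_0$); for such $G_0$ other than the two-vertex route of length $2$, no assumption on the relative order of $V_0$ and $V'$ is needed.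
   Context: All vertices are positive integers with their natural order. For a finite $V\subset\mathbb N$ and $N\ge1$, a route through $V$ of length $N$ is a sequence $\mathbf i=(i_1,\dots,i_N)\in V^N$ whose set of entries equals $V$. Its circuit multigraph $G_{\mathbf i}$ is the directed multigraph with vertex set $V$ and edge set $\{1,\dots,N\}$ (parallel edges and loops allowed, edges have their own identity), where edge $k<N$ goes from $i_k$ to $i_{k+1}$ and edge $N$ goes from $i_N$ to $i_1$. $\mathcal C_{V,N}$ is the set of all $G_{\mathbf i}$ for routes $\mathbf i$ through $V$ of length $N$; $G_{\mathbf i}$ is identified with $\mathbf i$. The set of black vertices is $B(G_{\mathbf i})=\{i_t: t\text{ odd}\}$. Balanced leaf: if $N>2$, a vertex $v$ is a balanced leaf of $G_{\mathbf i}$ if $v$ occurs exactly once in $\mathbf i$, say $i_t=v$, and its cyclic neighbours $i_{t-1},i_{t+1}$ (indices mod $N$) are equal; for $N\le2$ there are no balanced leaves. Removing the balanced leaf $v=i_t$: if $t<N$ delete the entries at positions $t,t+1$ of $\mathbf i$, if $t=N$ delete the entries at positions $N-1,N$; this yields a route $\mathbf i'$ through $V\setminus\{v\}$ of length $N-2$, and $G_{\mathbf i'}$ is the version of $G_{\mathbf i}$ with $v$ removed. Seed graph: if $G$ has no balanced leaf, $\operatorname S(G)=G$; otherwise $\operatorname S(G)=\operatorname S(\widetilde G)$ where $\widetilde G$ is $G$ with its smallest balanced leaf removed. *)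

theory Defs
  imports Complex_Main
begin

text \<open>Routes are lists of vertices (positive naturals); positions are 0-indexed
  here, so the paper's position t corresponds to list index t-1.\<close>

definition circuits :: "nat set \<Rightarrow> nat \<Rightarrow> nat list set" where
  "circuits V N = {i. 1 \<le> N \<and> length i = N \<and> set i = V}"

text \<open>Black vertices: entries at odd (1-indexed) positions = even list indices.\<close>
definition black :: "nat list \<Rightarrow> nat set" where
  "black i = {i ! k | k. k < length i \<and> even k}"

definition balanced_leaf :: "nat list \<Rightarrow> nat \<Rightarrow> bool" where
  "balanced_leaf i v \<longleftrightarrow> 2 < length i \<and> count_list i v = 1 \<and>
     (\<exists>t < length i. i ! t = v \<and>
        i ! ((t + length i - 1) mod length i) = i ! ((t + 1) mod length i))"

definition remove_leaf :: "nat list \<Rightarrow> nat \<Rightarrow> nat list" where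
  "remove_leaf i v = (let t = (THE t. t < length i \<and> i ! t = v) in
     if Suc t < length i then take t i @ drop (t + 2) i else take (length i - 2) i)"

lemma length_remove_leaf:
  assumes "2 < length i"
  shows "length (remove_leaf i v) < length i"
  using assms by (auto simp: remove_leaf_def Let_def)

function seed :: "nat list \<Rightarrow> nat list" where
  "seed i = (if \<exists>v. balanced_leaf i v
             then seed (remove_leaf i (LEAST v. balanced_leaf i v)) else i)"
  by pat_completeness auto
termination
proof (relation "measure length")
  fix i
  assume "\<exists>v. balanced_leaf i v"
  then have "balanced_leaf i (LEAST v. balanced_leaf i v)" by (rule LeastI_ex)
  then have "2 < length i" by (simp add: balanced_leaf_def)
  then show "(remove_leaf i (LEAST v. balanced_leaf i v), i) \<in> measure length"
    by (simp add: length_remove_leaf)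
qed simp

definition alt_route :: "nat \<Rightarrow> nat \<Rightarrow> nat \<Rightarrow> nat list" where
  "alt_route v1 v2 l0 = map (\<lambda>k. if even k then v1 else v2) [0..<2 * l0]"

definition seed_count :: "nat set \<Rightarrow> nat list \<Rightarrow> nat \<Rightarrow> nat set \<Rightarrow> nat set \<Rightarrow> nat" where
  "seed_count V0 g0 l0 B' W' =
     card {g \<in> circuits (V0 \<union> (B' \<union> W')) (2 * l0 + 2 * (card B' + card W')).
             seed g = g0 \<and> black g \<inter> (B' \<union> W') = B'}"

end

theory Submission
  imports Defs "HOL-Library.FuncSet"
begin


definition ins :: "nat list \<Rightarrow> nat \<Rightarrow> nat \<Rightarrow> nat list" where
  "ins j v p = (if p = 0 then v # last j # j
     else if p \<le> length j then take p j @ [v, j!(p-1)] @ drop p j else j @ [j!0, v])"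

definition kidx :: "nat \<Rightarrow> nat \<Rightarrow> nat" where
  "kidx M p = (if p = 0 then M - 1 else if p \<le> M then p - 1 else 0)"

definition shf :: "nat \<Rightarrow> nat \<Rightarrow> nat \<Rightarrow> nat" where
  "shf M p s = (if M < p then (if s = 0 then M else s) else if s < p then s else s + 2)"

lemma length_ins[simp]: "j \<noteq> [] \<Longrightarrow> length (ins j v p) = length j + 2"
  by (auto simp: ins_def)

lemma ins_nth:
  assumes "j \<noteq> []" "i < length j + 2"
  shows "ins j v p ! i = (if p = 0 then (if i = 0 then v else if i = 1 then j!(length j - 1) else j!(i-2))
     else if p \<le> length j then (if i < p then j!i else if i = p then v else if i = p+1 then j!(p-1) else j!(i-2))
     else (if i < length j then j!i else if i = length j then j!0 else v))"
proof -
  consider "p = 0" | "0 < p" "p \<le> length j" | "length j < p" by linarith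
  then show ?thesis
  proof cases
    case 1
    then show ?thesis using assms
      by (cases i) (auto simp: ins_def last_conv_nth nth_Cons split: nat.splits)
  next
    case 2
    then show ?thesis using assms
      apply (auto simp: ins_def nth_append min_def nth_Cons split: nat.splits)
      apply (rule arg_cong[where f="(!) j"]) by arith
  next
    case 3
    then show ?thesis using assms
      by (auto simp: ins_def nth_append nth_Cons split: nat.splits)
  qed
qed

lemma count_list_ins:
  assumes "j \<noteq> []"
  shows "count_list (ins j v p) u = count_list j u + (if u = v then 1 else 0)
     + (if u = j ! kidx (length j) p then 1 else 0)"
proof -
  consider "p = 0" | "0 < p" "p \<le> length j" | "length j < p" by linarith
  then show ?thesis
  proof cases
    case 1
    then show ?thesis using assms
      by (auto simp: ins_def kidx_def last_conv_nth)
  next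
    case 2
    have "count_list j u = count_list (take p j) u + count_list (drop p j) u"
      by (metis append_take_drop_id count_list_append)
    then show ?thesis using 2 assms
      by (auto simp: ins_def kidx_def)
  next
    case 3
    then show ?thesis using assms
      by (auto simp: ins_def kidx_def)
  qed
qed

lemma set_ins: "j \<noteq> [] \<Longrightarrow> set (ins j v p) = insert v (set j)"
  by (auto simp: ins_def last_in_set dest: in_set_takeD in_set_dropD)
     (metis append_take_drop_id Un_iff set_append)+

lemma count1_unique:
  "count_list xs x = 1 \<Longrightarrow> a < length xs \<Longrightarrow> b < length xs \<Longrightarrow> xs!a = x \<Longrightarrow> xs!b = x \<Longrightarrow> a = b"
proof (induction xs arbitrary: a b)
  case Nil
  then show ?case by simp
next
  case (Cons y ys)
  show ?case
  proof (cases "y = x")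
    case True
    then have "x \<notin> set ys" using Cons.prems(1) by (simp add: count_list_0_iff)
    then show ?thesis using Cons.prems True
      by (cases a; cases b) (auto simp: nth_Cons)
  next
    case False
    then show ?thesis using Cons
      by (cases a; cases b) (auto simp: nth_Cons)
  qed
qed

lemma mod_pred: "(x::nat) < N \<Longrightarrow> (x + N - 1) mod N = (if x = 0 then N - 1 else x - 1)"
proof (cases x)
  case 0
  assume "x < N"
  then have "N - 1 < N" by linarith
  then show ?thesis using 0 by simp
next
  case (Suc k)
  assume "x < N"
  then have "x + N - 1 = k + N" "k < N" using Suc by linarith+
  then show ?thesis using Suc by simp
qed

lemma mod_succ: "(x::nat) < N \<Longrightarrow> (x + 1) mod N = (if x + 1 = N then 0 else x + 1)"
proof (cases "x + 1 = N")
  case False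
  assume "x < N"
  then have "x + 1 < N" using False by linarith
  then show ?thesis using False by simp
next
  case True
  then show ?thesis by simp
qed

lemma balanced_leaf_iff:
  "balanced_leaf G u \<longleftrightarrow> 2 < length G \<and> count_list G u = 1 \<and>
     (\<forall>t<length G. G!t = u \<longrightarrow> G!((t+length G - 1) mod length G) = G!((t+1) mod length G))"
proof
  assume "balanced_leaf G u"
  then show "2 < length G \<and> count_list G u = 1 \<and>
     (\<forall>t<length G. G!t = u \<longrightarrow> G!((t+length G - 1) mod length G) = G!((t+1) mod length G))"
    unfolding balanced_leaf_def using count1_unique by metis
next
  assume a: "2 < length G \<and> count_list G u = 1 \<and>
     (\<forall>t<length G. G!t = u \<longrightarrow> G!((t+length G - 1) mod length G) = G!((t+1) mod length G))"
  then have "u \<in> set G" by (metis count_notin zero_neq_one)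
  then obtain t where "t < length G" "G!t = u" by (auto simp: in_set_conv_nth)
  then show "balanced_leaf G u" using a unfolding balanced_leaf_def by blast
qed

lemma ins_nth_shf:
  assumes "j \<noteq> []" "p \<le> length j + 1" "s < length j"
  shows "ins j v p ! shf (length j) p s = j ! s"
  using assms by (subst ins_nth) (auto simp: shf_def)

lemma shf_less: "p \<le> M + 1 \<Longrightarrow> s < M \<Longrightarrow> shf M p s < M + 2"
  by (auto simp: shf_def)

lemma ins_nth_p: "j \<noteq> [] \<Longrightarrow> p \<le> length j + 1 \<Longrightarrow> ins j v p ! p = v"
  by (subst ins_nth) auto


lemma ins_nth':
  assumes "length j = M" "M \<noteq> 0" "i < M + 2"
  shows "ins j v p ! i = (if p = 0 then (if i = 0 then v else if i = 1 then j!(M - 1) else j!(i-2))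
     else if p \<le> M then (if i < p then j!i else if i = p then v else if i = p+1 then j!(p-1) else j!(i-2))
     else (if i < M then j!i else if i = M then j!0 else v))"
  using ins_nth[of j i v p] assms by auto

lemma ins_neighbors:
  assumes "2 \<le> length j" "p \<le> length j + 1" "s < length j" "s \<noteq> kidx (length j) p"
  shows "ins j v p ! ((shf (length j) p s + (length j + 2) - 1) mod (length j + 2)) = j ! ((s + length j - 1) mod length j)"
    and "ins j v p ! ((shf (length j) p s + 1) mod (length j + 2)) = j ! ((s + 1) mod length j)"
proof -
  define M where "M = length j"
  have ne: "j \<noteq> []" using assms by auto
  have sl: "shf M p s < M + 2" using assms shf_less M_def by auto
  have sM: "s < M" using assms M_def by auto
  have a1: "(shf M p s + (M + 2) - 1) mod (M + 2) = (if shf M p s = 0 then M + 1 else shf M p s - 1)"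
    using mod_pred[OF sl] by simp
  have a2: "(s + M - 1) mod M = (if s = 0 then M - 1 else s - 1)"
    using mod_pred[OF sM] by simp
  have a3: "(shf M p s + 1) mod (M + 2) = (if shf M p s + 1 = M + 2 then 0 else shf M p s + 1)"
    using mod_succ[OF sl] by simp
  have a4: "(s + 1) mod M = (if s + 1 = M then 0 else s + 1)"
    using mod_succ[OF sM] by simp
  have i1: "(if shf M p s = 0 then M + 1 else shf M p s - 1) < M + 2" using sl by auto
  have i2: "(if shf M p s + 1 = M + 2 then 0 else shf M p s + 1) < M + 2" using sl by auto
  have "ins j v p ! (if shf M p s = 0 then M + 1 else shf M p s - 1) = j ! (if s = 0 then M - 1 else s - 1)"
    using assms unfolding M_def[symmetric]
    apply (subst ins_nth'[OF M_def[symmetric] _ i1])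
    using ne M_def apply simp
    by (auto simp: shf_def kidx_def)
  then show "ins j v p ! ((shf (length j) p s + (length j + 2) - 1) mod (length j + 2)) = j ! ((s + length j - 1) mod length j)"
    using a1 a2 M_def by simp
  have "ins j v p ! (if shf M p s + 1 = M + 2 then 0 else shf M p s + 1) = j ! (if s + 1 = M then 0 else s + 1)"
    using assms unfolding M_def[symmetric]
    apply (subst ins_nth'[OF M_def[symmetric] _ i2])
    using ne M_def apply simp
    by (auto simp: shf_def kidx_def)
  then show "ins j v p ! ((shf (length j) p s + 1) mod (length j + 2)) = j ! ((s + 1) mod length j)"
    using a3 a4 M_def by simp
qed


lemma kidx_less: "0 < M \<Longrightarrow> p \<le> M + 1 \<Longrightarrow> kidx M p < M"
  by (auto simp: kidx_def)

lemma ins_leaf_other: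
  assumes len: "2 < length j" and p: "p \<le> length j + 1" and uv: "u \<noteq> v"
  shows "balanced_leaf (ins j v p) u \<longleftrightarrow> balanced_leaf j u \<and> u \<noteq> j ! kidx (length j) p"
proof -
  define M where "M = length j"
  have ne: "j \<noteq> []" using len by auto
  have kl: "kidx M p < M" using p len unfolding M_def kidx_def by auto
  have kin: "j ! kidx M p \<in> set j" using kl M_def by auto
  have cnt: "count_list (ins j v p) u = count_list j u + (if u = j ! kidx M p then 1 else 0)"
    using count_list_ins[OF ne, of v p u] uv M_def by simp
  have lenI: "length (ins j v p) = M + 2" using ne M_def by simp
  have nbr: "ins j v p ! ((shf M p s + (M + 2) - 1) mod (M + 2)) = j ! ((s + M - 1) mod M)
           \<and> ins j v p ! ((shf M p s + 1) mod (M + 2)) = j ! ((s + 1) mod M)"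
    if "s < M" "s \<noteq> kidx M p" for s
    using ins_neighbors[of j p s v] that len p M_def by auto
  show ?thesis
  proof
    assume bl: "balanced_leaf (ins j v p) u"
    then have c1: "count_list (ins j v p) u = 1" by (simp add: balanced_leaf_iff)
    have cj: "count_list j u = 1 \<and> u \<noteq> j ! kidx M p"
    proof (cases "u = j ! kidx M p")
      case True
      then have "count_list j u \<noteq> 0" using kin by (simp add: count_list_0_iff)
      then show ?thesis using c1 cnt True by simp
    next
      case False
      then show ?thesis using c1 cnt by simp
    qed
    have "\<forall>s<M. j!s = u \<longrightarrow> j!((s + M - 1) mod M) = j!((s+1) mod M)"
    proof (intro allI impI)
      fix s assume s: "s < M" "j!s = u"
      then have sk: "s \<noteq> kidx M p" using cj by auto
      have "shf M p s < M + 2" using shf_less p s M_def by auto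
      moreover have "ins j v p ! shf M p s = u" using ins_nth_shf[OF ne, of p s v] p s M_def by simp
      ultimately have "ins j v p ! ((shf M p s + (M+2) - 1) mod (M+2)) = ins j v p ! ((shf M p s + 1) mod (M+2))"
        using bl lenI by (simp add: balanced_leaf_iff)
      then show "j!((s + M - 1) mod M) = j!((s+1) mod M)" using nbr[OF s(1) sk] by simp
    qed
    then show "balanced_leaf j u \<and> u \<noteq> j ! kidx (length j) p"
      using cj len M_def by (simp add: balanced_leaf_iff)
  next
    assume a: "balanced_leaf j u \<and> u \<noteq> j ! kidx (length j) p"
    then have cj: "count_list j u = 1" "u \<noteq> j ! kidx M p" using M_def by (auto simp: balanced_leaf_iff)
    have c1: "count_list (ins j v p) u = 1" using cj cnt by simp
    have "u \<in> set j" using cj by (metis count_notin zero_neq_one)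
    then obtain s where s: "s < M" "j!s = u" using M_def by (auto simp: in_set_conv_nth)
    then have sk: "s \<noteq> kidx M p" using cj by auto
    have ssl: "shf M p s < M + 2" using shf_less p s M_def by auto
    have su: "ins j v p ! shf M p s = u" using ins_nth_shf[OF ne, of p s v] p s M_def by simp
    have "\<forall>t<M+2. ins j v p ! t = u \<longrightarrow> ins j v p ! ((t + (M+2) - 1) mod (M+2)) = ins j v p ! ((t + 1) mod (M+2))"
    proof (intro allI impI)
      fix t assume t: "t < M + 2" "ins j v p ! t = u"
      then have "t = shf M p s" using count1_unique[OF c1, of t "shf M p s"] ssl su lenI by simp
      moreover have "j!((s + M - 1) mod M) = j!((s+1) mod M)" using a s M_def by (simp add: balanced_leaf_iff)
      ultimately show "ins j v p ! ((t + (M+2) - 1) mod (M+2)) = ins j v p ! ((t + 1) mod (M+2))"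
        using nbr[OF s(1) sk] by simp
    qed
    then show "balanced_leaf (ins j v p) u" using c1 lenI len M_def ne by (simp add: balanced_leaf_iff)
  qed
qed

lemma ins_leaf_self:
  assumes len: "1 \<le> length j" and p: "p \<le> length j + 1" and v: "v \<notin> set j"
  shows "balanced_leaf (ins j v p) v"
proof -
  define M where "M = length j"
  have ne: "j \<noteq> []" using len by auto
  have kl: "kidx M p < M" using p len unfolding M_def kidx_def by auto
  have kin: "j ! kidx M p \<noteq> v" using kl M_def v by (metis nth_mem)
  have c1: "count_list (ins j v p) v = 1"
    using count_list_ins[OF ne, of v p v] v kin M_def by simp
  have lenI: "length (ins j v p) = M + 2" using ne M_def by simp
  have pv: "ins j v p ! p = v" using ins_nth_p[OF ne] p by simp
  have pl: "p < M + 2" using p M_def by simp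
  have m1: "(p + (M + 2) - 1) mod (M + 2) = (if p = 0 then M + 1 else p - 1)" using mod_pred[OF pl] by simp
  have m2: "(p + 1) mod (M + 2) = (if p + 1 = M + 2 then 0 else p + 1)" using mod_succ[OF pl] by simp
  have i1: "(if p = 0 then M + 1 else p - 1) < M + 2" using pl by auto
  have i2: "(if p + 1 = M + 2 then 0 else p + 1) < M + 2" using pl by auto
  have "ins j v p ! (if p = 0 then M + 1 else p - 1) = ins j v p ! (if p + 1 = M + 2 then 0 else p + 1)"
    apply (subst ins_nth'[OF M_def[symmetric] _ i1])
    using ne M_def apply simp
    apply (subst ins_nth'[OF M_def[symmetric] _ i2])
    using ne M_def apply simp
    using p M_def len by auto
  then have "ins j v p ! ((p + (M+2) - 1) mod (M+2)) = ins j v p ! ((p + 1) mod (M+2))"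
    using m1 m2 by simp
  then have "\<forall>t<M+2. ins j v p ! t = v \<longrightarrow> ins j v p ! ((t + (M+2) - 1) mod (M+2)) = ins j v p ! ((t + 1) mod (M+2))"
    using count1_unique[OF c1] pv pl lenI by metis
  then show ?thesis using c1 lenI len M_def ne by (simp add: balanced_leaf_iff)
qed

lemma remove_leaf_ins:
  assumes len: "1 \<le> length j" and p: "p \<le> length j + 1" and v: "v \<notin> set j"
  shows "remove_leaf (ins j v p) v = j"
proof -
  have ne: "j \<noteq> []" using len by auto
  have c1: "count_list (ins j v p) v = 1" using ins_leaf_self[OF len p v] by (simp add: balanced_leaf_iff)
  have pv: "ins j v p ! p = v" using ins_nth_p[OF ne] p by simp
  have lenI: "length (ins j v p) = length j + 2" using ne by simp
  have th: "(THE t. t < length (ins j v p) \<and> ins j v p ! t = v) = p"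
  proof (rule the_equality)
    have pl: "p < length (ins j v p)" using lenI p by simp
    then show "p < length (ins j v p) \<and> ins j v p ! p = v" using pv by simp
    show "\<And>t. t < length (ins j v p) \<and> ins j v p ! t = v \<Longrightarrow> t = p"
      using count1_unique[OF c1] pv pl by blast
  qed
  have "remove_leaf (ins j v p) v = (if Suc p < length (ins j v p) then take p (ins j v p) @ drop (p+2) (ins j v p)
     else take (length (ins j v p) - 2) (ins j v p))"
    unfolding remove_leaf_def Let_def th by simp
  also have "\<dots> = j"
  proof (cases "p = 0")
    case True then show ?thesis using ne by (simp add: ins_def)
  next
    case False
    show ?thesis
    proof (cases "p \<le> length j")
      case True then show ?thesis using ne False by (simp add: ins_def)
    next
      case F2: False
      then show ?thesis using ne False p by (simp add: ins_def)
    qed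
  qed
  finally show ?thesis .
qed




lemma leaf_decomp:
  assumes bl: "balanced_leaf G v" and t: "t < length G" "G!t = v"
  shows "remove_leaf G v \<noteq> [] \<and> length (remove_leaf G v) + 2 = length G \<and>
         G = ins (remove_leaf G v) v t \<and> v \<notin> set (remove_leaf G v)"
proof -
  define N where "N = length G"
  have N2: "2 < N" and c1: "count_list G v = 1" using bl N_def by (auto simp: balanced_leaf_iff)
  have nb0: "G!((t + N - 1) mod N) = G!((t+1) mod N)" using bl t N_def by (simp add: balanced_leaf_iff)
  have tN: "t < N" using t N_def by simp
  have nb: "G!(if t = 0 then N-1 else t-1) = G!(if t+1 = N then 0 else t+1)"
    using nb0 mod_pred[OF tN] mod_succ[OF tN] by simp
  have th: "(THE t. t < length G \<and> G ! t = v) = t"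
  proof (rule the_equality)
    show "t < length G \<and> G ! t = v" using t by simp
    show "\<And>s. s < length G \<and> G ! s = v \<Longrightarrow> s = t"
      using count1_unique[OF c1] t by blast
  qed
  define j where "j = remove_leaf G v"
  have jdef: "j = (if Suc t < N then take t G @ drop (t+2) G else take (N - 2) G)"
    unfolding j_def remove_leaf_def Let_def th N_def by simp
  have lj: "length j = N - 2" using jdef tN N2 N_def by auto
  have jne: "j \<noteq> []" using lj N2 by auto
  have jn: "j!k = (if t + 1 < N \<and> t \<le> k then G!(k+2) else G!k)" if "k < N - 2" for k
  proof (cases "t + 1 < N")
    case True
    then have j1: "j = take t G @ drop (t+2) G" using jdef by simp
    have lt: "length (take t G) = t" using tN N_def by simp
    show ?thesis
    proof (cases "k < t")
      case True then show ?thesis using j1 lt by (simp add: nth_append)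
    next
      case False
      then have "j!k = drop (t+2) G ! (k - t)" using j1 lt by (simp add: nth_append)
      also have "\<dots> = G ! (t + 2 + (k - t))" using True N_def by (simp add: nth_drop)
      also have "t + 2 + (k - t) = k + 2" using False by simp
      finally show ?thesis using True False by simp
    qed
  next
    case False
    then show ?thesis using jdef that by simp
  qed
  have eq: "ins j v t = G"
  proof (rule nth_equalityI)
    show "length (ins j v t) = length G" using jne lj N2 N_def by simp
    fix i assume "i < length (ins j v t)"
    then have i: "i < (N - 2) + 2" using jne lj by simp
    have "ins j v t ! i = (if t = 0 then (if i = 0 then v else if i = 1 then j!((N-2) - 1) else j!(i-2))
     else if t \<le> N - 2 then (if i < t then j!i else if i = t then v else if i = t+1 then j!(t-1) else j!(i-2))
     else (if i < N - 2 then j!i else if i = N - 2 then j!0 else v))"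
      using ins_nth'[OF lj _ i] N2 by simp
    also have "\<dots> = G ! i"
    proof -
      consider "t = 0" | "0 < t" "t \<le> N - 2" | "N - 2 < t" by linarith
      then show ?thesis
      proof cases
        case 1
        have "i = 0 \<or> i = 1 \<or> 2 \<le> i" by linarith
        moreover have "j!((N-2) - 1) = G!1"
        proof -
          have e: "(N-2)-1 = N-3" "N-3 < N-2" "N-3+2 = N-1" using N2 by arith+
          show ?thesis using jn[of "N-3"] nb 1 e N2 by simp
        qed
        moreover have "2 \<le> i \<Longrightarrow> j!(i-2) = G!i"
        proof -
          assume i2: "2 \<le> i"
          then have e: "i - 2 + 2 = i" "i - 2 < N - 2" using i by arith+
          show ?thesis using jn[of "i-2"] e 1 N2 by simp
        qed
        ultimately show ?thesis using 1 t by auto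
      next
        case 2
        have "i < t \<or> i = t \<or> i = t + 1 \<or> t + 1 < i" by linarith
        moreover have "i < t \<Longrightarrow> j!i = G!i" using jn[of i] 2 by simp
        moreover have "j!(t-1) = G!(t+1)"
        proof -
          have e: "t + 1 \<noteq> N" "t - 1 < N - 2" "\<not> t \<le> t - 1" using 2 N2 by arith+
          show ?thesis using jn[of "t-1"] nb e 2 by simp
        qed
        moreover have "t + 1 < i \<Longrightarrow> j!(i-2) = G!i"
        proof -
          assume i2: "t + 1 < i"
          then have e: "i - 2 + 2 = i" "i - 2 < N - 2" "t \<le> i - 2" "t + 1 < N" using i 2 N2 by arith+
          show ?thesis using jn[of "i-2"] e by simp
        qed
        ultimately show ?thesis using 2 t by auto
      next
        case 3
        then have t3: "t = N - 1" using tN by simp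
        have "i < N - 2 \<or> i = N - 2 \<or> i = N - 1" using i N2 by linarith
        moreover have "i < N - 2 \<Longrightarrow> j!i = G!i" using jn[of i] t3 by simp
        moreover have "j!0 = G!(N-2)" using jn[of 0] nb t3 N2 by (simp add: numeral_2_eq_2)
        ultimately show ?thesis using 3 t t3 N2 by auto
      qed
    qed
    finally show "ins j v t ! i = G ! i" .
  qed
  have "count_list G v = count_list j v + 1 + (if v = j ! kidx (length j) t then 1 else 0)"
    using count_list_ins[OF jne, of v t v] eq by simp
  then have "count_list j v = 0" using c1 by simp
  then show ?thesis using jne lj eq N_def N2 j_def by (simp add: count_list_0_iff)
qed

lemma black_memI: "k < length G \<Longrightarrow> even k \<Longrightarrow> G!k \<in> black G"
  unfolding black_def by blast

lemma black_memE: "x \<in> black G \<Longrightarrow> \<exists>k<length G. even k \<and> x = G!k"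
  unfolding black_def by blast

lemma black_ins:
  assumes ne: "j \<noteq> []" and ev: "even (length j)" and p: "p \<le> length j + 1"
  shows "black (ins j v p) = black j \<union> (if even p then {v} else {})"
proof -
  define M where "M = length j"
  have lenI: "length (ins j v p) = M + 2" using ne M_def by simp
  have M0: "M \<noteq> 0" using ne M_def by simp
  have M2: "2 \<le> M" using M0 ev M_def by presburger
  show ?thesis
  proof
    show "black (ins j v p) \<subseteq> black j \<union> (if even p then {v} else {})"
    proof
      fix x assume "x \<in> black (ins j v p)"
      then obtain k where k: "k < M + 2" "even k" "x = ins j v p ! k" using black_memE lenI by metis
      have xk: "x = (if p = 0 then (if k = 0 then v else if k = 1 then j!(M - 1) else j!(k-2))
        else if p \<le> M then (if k < p then j!k else if k = p then v else if k = p+1 then j!(p-1) else j!(k-2))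
        else (if k < M then j!k else if k = M then j!0 else v))"
        using ins_nth'[OF M_def[symmetric] M0 k(1)] k(3) by simp
      have kM: "k \<noteq> M + 1" using k(2) ev M_def by auto
      have "(x = v \<and> k = p) \<or> (\<exists>i<M. even i \<and> x = j!i)"
      proof -
        consider "p = 0" | "0 < p" "p \<le> M" | "M < p" by linarith
        then show ?thesis
        proof cases
          case 1
          then have "k = 0 \<or> 2 \<le> k" using k(2) by presburger
          moreover have "2 \<le> k \<Longrightarrow> k - 2 < M \<and> even (k - 2)" using k by auto
          ultimately show ?thesis using xk 1 by auto
        next
          case 2
          have "k < p \<or> k = p \<or> k = p + 1 \<or> p + 1 < k" by linarith
          moreover have "k = p + 1 \<Longrightarrow> even (p - 1) \<and> p - 1 < M" using k(2) 2 by auto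
          moreover have "p + 1 < k \<Longrightarrow> even (k - 2) \<and> k - 2 < M" using k 2 by auto
          moreover have "k < p \<Longrightarrow> \<exists>i<M. even i \<and> x = j!i"
          proof -
            assume "k < p"
            then have "k < M" "x = j!k" using 2 xk by auto
            then show ?thesis using k(2) by blast
          qed
          ultimately show ?thesis using xk 2 k(2) by auto
        next
          case 3
          have "k < M \<or> k = M" using k(1) kM by linarith
          moreover have "k < M \<Longrightarrow> \<exists>i<M. even i \<and> x = j!i"
          proof -
            assume "k < M"
            then have "x = j!k" using 3 xk by auto
            then show ?thesis using k(2) \<open>k < M\<close> by blast
          qed
          moreover have "k = M \<Longrightarrow> \<exists>i<M. even i \<and> x = j!i"
          proof -
            assume "k = M"
            then have "x = j!0" using 3 xk by auto
            then show ?thesis using M2 by (intro exI[of _ 0]) auto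
          qed
          ultimately show ?thesis by blast
        qed
      qed
      moreover have "j!i \<in> black j" if "i < M" "even i" for i
        using that M_def black_memI by simp
      ultimately show "x \<in> black j \<union> (if even p then {v} else {})"
        using k(2) by (cases "even p") auto
    qed
  next
    show "black j \<union> (if even p then {v} else {}) \<subseteq> black (ins j v p)"
    proof
      fix x assume x: "x \<in> black j \<union> (if even p then {v} else {})"
      show "x \<in> black (ins j v p)"
      proof (cases "x \<in> black j")
        case True
        then obtain s where s: "s < M" "even s" "x = j!s" using black_memE M_def by metis
        have "ins j v p ! shf M p s = x" using ins_nth_shf[OF ne, of p s v] p s M_def by simp
        moreover have "shf M p s < M + 2" using shf_less p s M_def by auto
        moreover have "even (shf M p s)" using s ev M_def by (auto simp: shf_def)
        ultimately show ?thesis using lenI black_memI by metis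
      next
        case False
        then have "x = v" "even p" using x by (auto split: if_splits)
        moreover have "ins j v p ! p = v" using ins_nth_p[OF ne] p by simp
        moreover have "p < length (ins j v p)" using lenI p M_def by simp
        ultimately show ?thesis using black_memI by metis
      qed
    qed
  qed
qed




definition leafE :: "nat \<Rightarrow> nat set \<Rightarrow> (nat \<Rightarrow> nat) \<Rightarrow> nat \<Rightarrow> bool" where
  "leafE N D \<phi> u \<longleftrightarrow> u \<in> D \<and> (\<phi> u + 1) mod N \<notin> \<phi> ` D"

definition insE :: "nat \<Rightarrow> (nat \<Rightarrow> nat) \<Rightarrow> nat \<Rightarrow> nat \<Rightarrow> nat \<Rightarrow> nat" where
  "insE M \<phi> v p = (\<lambda>u. if u = v then p else shf M p (\<phi> u))"

definition unshf :: "nat \<Rightarrow> nat \<Rightarrow> nat \<Rightarrow> nat" where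
  "unshf N t x = (if t = N - 1 then (if x = N - 2 then 0 else x) else if x < t then x else x - 2)"

definition remE :: "nat \<Rightarrow> (nat \<Rightarrow> nat) \<Rightarrow> nat \<Rightarrow> nat \<Rightarrow> nat" where
  "remE N \<phi> v = (\<lambda>u. unshf N (\<phi> v) (\<phi> u))"

lemma shf_inj: "s1 < M \<Longrightarrow> s2 < M \<Longrightarrow> shf M p s1 = shf M p s2 \<Longrightarrow> s1 = s2"
  by (auto simp: shf_def split: if_splits)

lemma shf_ne_p: "s < M \<Longrightarrow> p \<le> M + 1 \<Longrightarrow> shf M p s \<noteq> p"
  by (auto simp: shf_def)

lemma unshf_shf: "s < M \<Longrightarrow> p \<le> M + 1 \<Longrightarrow> unshf (M + 2) p (shf M p s) = s"
  by (auto simp: shf_def unshf_def)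

lemma shf_unshf:
  assumes "x < N" "t < N" "x \<noteq> t" "(t + 1) mod N \<noteq> x" "2 < N"
  shows "shf (N - 2) t (unshf N t x) = x \<and> unshf N t x < N - 2"
proof (cases "t = N - 1")
  case True
  then have "x \<noteq> 0" using assms by auto
  then show ?thesis using True assms by (auto simp: shf_def unshf_def)
next
  case False
  then have "x \<noteq> t + 1" using assms by auto
  then show ?thesis using False assms by (auto simp: shf_def unshf_def)
qed

lemma leafE_cong: "(\<And>u. u \<in> D \<Longrightarrow> \<phi>1 u = \<phi>2 u) \<Longrightarrow> leafE N D \<phi>1 = leafE N D \<phi>2"
  unfolding leafE_def by (auto simp: fun_eq_iff image_def)

lemma shf_eq_le: "p \<le> M \<Longrightarrow> shf M p y = z \<longleftrightarrow> (y < p \<and> y = z) \<or> (p \<le> y \<and> y + 2 = z)"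
  by (auto simp: shf_def)

lemma shf_eq_gt: "M < p \<Longrightarrow> shf M p y = z \<longleftrightarrow> (y = 0 \<and> z = M) \<or> (y \<noteq> 0 \<and> y = z)"
  by (auto simp: shf_def)

lemma leaf_shift:
  assumes S: "S \<subseteq> {..<M}" and x: "x \<in> S" and p: "p \<le> M + 1" and M: "2 \<le> M"
  shows "((shf M p x + 1) mod (M+2) \<notin> insert p (shf M p ` S)) \<longleftrightarrow> ((x+1) mod M \<notin> S \<and> x \<noteq> kidx M p)"
proof -
  have xM: "x < M" using S x by auto
  have mem: "z \<in> shf M p ` S \<longleftrightarrow> (\<exists>y\<in>S. shf M p y = z)" for z by auto
  note mm = mem[symmetric]
  consider "p \<le> M" "x + 1 < p" | "p \<le> M" "0 < p" "x + 1 = p" | "p \<le> M" "p \<le> x" "x + 1 < M" | "p \<le> M" "p \<le> x" "x + 1 = M"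
    | "M < p" "x = 0" | "M < p" "0 < x" "x + 1 < M" | "M < p" "0 < x" "x + 1 = M"
    using xM by linarith
  then show ?thesis
  proof cases
    case 1
    have e1: "shf M p x = x" using 1 by (simp add: shf_def)
    have e2: "(x + 1) mod (M + 2) = x + 1" "(x + 1) mod M = x + 1" using 1 by auto
    have k: "x \<noteq> kidx M p" using 1 by (auto simp: kidx_def)
    have "x + 1 \<noteq> p" using 1 by simp
    moreover have "(\<exists>y\<in>S. shf M p y = x + 1) \<longleftrightarrow> x + 1 \<in> S" using 1 by (auto simp: shf_eq_le)
    ultimately show ?thesis unfolding e1 e2 using mm k by auto
  next
    case 2
    have e1: "shf M p x = x" using 2 by (simp add: shf_def)
    have e2: "(x + 1) mod (M + 2) = p" using 2 by auto
    show ?thesis unfolding e1 e2 using 2 by (auto simp: kidx_def)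
  next
    case 3
    have e1: "shf M p x = x + 2" using 3 by (simp add: shf_def)
    have e2: "(x + 2 + 1) mod (M + 2) = x + 3" "(x + 1) mod M = x + 1" using 3 by auto
    have k: "x \<noteq> kidx M p" using 3 by (auto simp: kidx_def)
    have "x + 3 \<noteq> p" using 3 by simp
    moreover have "(\<exists>y\<in>S. shf M p y = x + 3) \<longleftrightarrow> x + 1 \<in> S"
      using 3 by (auto simp: shf_eq_le) (metis add_2_eq_Suc' add_Suc_right le_SucI numeral_3_eq_3 plus_1_eq_Suc)
    ultimately show ?thesis unfolding e1 e2 using mm k by auto
  next
    case 4
    have e1: "shf M p x = x + 2" using 4 by (simp add: shf_def)
    have e2: "(x + 2 + 1) mod (M + 2) = 0" "(x + 1) mod M = 0" using 4 by auto
    show ?thesis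
    proof (cases "p = 0")
      case True
      then show ?thesis unfolding e1 e2 using 4 by (auto simp: kidx_def)
    next
      case False
      have k: "x \<noteq> kidx M p" using 4 False by (auto simp: kidx_def)
      have "(\<exists>y\<in>S. shf M p y = 0) \<longleftrightarrow> 0 \<in> S" using False 4 by (auto simp: shf_eq_le)
      then show ?thesis unfolding e1 e2 using mm k False by auto
    qed
  next
    case 5
    have e1: "shf M p x = M" using 5 by (simp add: shf_def)
    have e2: "(M + 1) mod (M + 2) = M + 1" by simp
    have "p = M + 1" using 5 p by simp
    then show ?thesis unfolding e1 e2 using 5 by (auto simp: kidx_def)
  next
    case 6
    have e1: "shf M p x = x" using 6 by (simp add: shf_def)
    have e2: "(x + 1) mod (M + 2) = x + 1" "(x + 1) mod M = x + 1" using 6 by auto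
    have k: "x \<noteq> kidx M p" using 6 by (auto simp: kidx_def)
    have "x + 1 \<noteq> p" using 6 p by simp
    moreover have "(\<exists>y\<in>S. shf M p y = x + 1) \<longleftrightarrow> x + 1 \<in> S" using 6 by (auto simp: shf_eq_gt)
    ultimately show ?thesis unfolding e1 e2 using mm k by auto
  next
    case 7
    have e1: "shf M p x = x" using 7 by (simp add: shf_def)
    have e2: "(x + 1) mod (M + 2) = M" "(x + 1) mod M = 0" using 7 by auto
    have k: "x \<noteq> kidx M p" using 7 by (auto simp: kidx_def)
    have "M \<noteq> p" using 7 p by simp
    moreover have "(\<exists>y\<in>S. shf M p y = M) \<longleftrightarrow> 0 \<in> S" using 7 S by (auto simp: shf_eq_gt)
    ultimately show ?thesis unfolding e1 e2 using mm k by auto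
  qed
qed


lemma leafE_ins:
  assumes S: "\<phi>' ` D' \<subseteq> {..<M}" and v: "v \<notin> D'" and p: "p \<le> M + 1" and M: "2 \<le> M"
  shows "u \<in> D' \<Longrightarrow> leafE (M+2) (insert v D') (insE M \<phi>' v p) u \<longleftrightarrow> leafE M D' \<phi>' u \<and> \<phi>' u \<noteq> kidx M p"
    and "leafE (M+2) (insert v D') (insE M \<phi>' v p) v"
proof -
  have img: "insE M \<phi>' v p ` insert v D' = insert p (shf M p ` (\<phi>' ` D'))"
    using v by (auto simp: insE_def image_iff)
  show "u \<in> D' \<Longrightarrow> leafE (M+2) (insert v D') (insE M \<phi>' v p) u \<longleftrightarrow> leafE M D' \<phi>' u \<and> \<phi>' u \<noteq> kidx M p"
  proof -
    assume u: "u \<in> D'"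
    then have uv: "u \<noteq> v" using v by auto
    have "insE M \<phi>' v p u = shf M p (\<phi>' u)" using uv by (simp add: insE_def)
    then show ?thesis unfolding leafE_def img using leaf_shift[OF S _ p M, of "\<phi>' u"] u by auto
  qed
  have "(p + 1) mod (M + 2) \<notin> insert p (shf M p ` (\<phi>' ` D'))"
  proof
    assume a: "(p + 1) mod (M + 2) \<in> insert p (shf M p ` (\<phi>' ` D'))"
    have pl: "p < M + 2" using p by simp
    consider "p + 1 < M + 2" | "p + 1 = M + 2" using pl by linarith
    then show False
    proof cases
      case 1
      then have e: "(p + 1) mod (M + 2) = p + 1" by simp
      then have "p + 1 \<in> shf M p ` (\<phi>' ` D')" using a by auto
      then obtain y where "y \<in> \<phi>' ` D'" "shf M p y = p + 1" by (metis imageE)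
      then show False using 1 S by (auto simp: shf_def split: if_splits)
    next
      case 2
      then have e: "(p + 1) mod (M + 2) = 0" by simp
      then have "0 \<in> shf M p ` (\<phi>' ` D')" using a 2 by auto
      then obtain y where "y \<in> \<phi>' ` D'" "shf M p y = 0" by (metis imageE)
      then show False using 2 M by (auto simp: shf_def split: if_splits)
    qed
  qed
  then show "leafE (M+2) (insert v D') (insE M \<phi>' v p) v" unfolding leafE_def img by (simp add: insE_def)
qed

lemma insE_inj:
  assumes S: "\<phi>' ` D' \<subseteq> {..<M}" and inj: "inj_on \<phi>' D'" and v: "v \<notin> D'" and p: "p \<le> M + 1"
  shows "inj_on (insE M \<phi>' v p) (insert v D')" and "insE M \<phi>' v p ` insert v D' \<subseteq> {..<M+2}"
proof -
  show "inj_on (insE M \<phi>' v p) (insert v D')"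
  proof (rule inj_onI)
    fix a b assume a: "a \<in> insert v D'" and b: "b \<in> insert v D'" and e: "insE M \<phi>' v p a = insE M \<phi>' v p b"
    show "a = b"
    proof (cases "a = v"; cases "b = v")
      assume "a = v" "b \<noteq> v"
      then show "a = b" using e b S shf_ne_p[OF _ p, of "\<phi>' b"] by (auto simp: insE_def)
    next
      assume "a \<noteq> v" "b = v"
      then show "a = b" using e a S shf_ne_p[OF _ p, of "\<phi>' a"] by (auto simp: insE_def)
    next
      assume "a \<noteq> v" "b \<noteq> v"
      then have "\<phi>' a = \<phi>' b" using e a b S shf_inj[of "\<phi>' a" M "\<phi>' b" p] by (auto simp: insE_def)
      then show "a = b" using inj a b \<open>a \<noteq> v\<close> \<open>b \<noteq> v\<close> by (auto simp: inj_on_def)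
    qed simp
  qed
  show "insE M \<phi>' v p ` insert v D' \<subseteq> {..<M+2}"
    using S p shf_less[OF p] by (auto simp: insE_def)
qed

lemma remE_props:
  assumes S: "\<phi> ` D \<subseteq> {..<N}" and inj: "inj_on \<phi> D" and lf: "leafE N D \<phi> v" and N: "2 < N"
  shows "\<And>u. u \<in> D - {v} \<Longrightarrow> remE N \<phi> v u < N - 2 \<and> shf (N - 2) (\<phi> v) (remE N \<phi> v u) = \<phi> u"
    and "inj_on (remE N \<phi> v) (D - {v})"
proof -
  have vD: "v \<in> D" and nl: "(\<phi> v + 1) mod N \<notin> \<phi> ` D" using lf by (auto simp: leafE_def)
  show a: "remE N \<phi> v u < N - 2 \<and> shf (N - 2) (\<phi> v) (remE N \<phi> v u) = \<phi> u" if u: "u \<in> D - {v}" for u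
  proof -
    have "\<phi> u \<noteq> \<phi> v" using inj u vD by (auto simp: inj_on_def)
    moreover have "(\<phi> v + 1) mod N \<noteq> \<phi> u" using nl u by auto
    ultimately show ?thesis using shf_unshf[of "\<phi> u" N "\<phi> v"] S u vD N by (auto simp: remE_def)
  qed
  show "inj_on (remE N \<phi> v) (D - {v})"
  proof (rule inj_onI)
    fix a b assume "a \<in> D - {v}" "b \<in> D - {v}" "remE N \<phi> v a = remE N \<phi> v b"
    then have "\<phi> a = \<phi> b" using a by metis
    then show "a = b" using inj \<open>a \<in> D - {v}\<close> \<open>b \<in> D - {v}\<close> by (auto simp: inj_on_def)
  qed
qed

lemma leafE_exists:
  assumes S: "\<phi> ` D \<subseteq> {..<N}" and inj: "inj_on \<phi> D" and ne: "D \<noteq> {}" and fin: "finite D" and c: "card D < N"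
  shows "\<exists>u. leafE N D \<phi> u"
proof (rule ccontr)
  assume "\<not> (\<exists>u. leafE N D \<phi> u)"
  then have cl: "\<And>x. x \<in> \<phi> ` D \<Longrightarrow> (x + 1) mod N \<in> \<phi> ` D" unfolding leafE_def by auto
  obtain x0 where x0: "x0 \<in> \<phi> ` D" using ne by auto
  have N0: "0 < N" using c by simp
  have it: "(x0 + k) mod N \<in> \<phi> ` D" for k
  proof (induction k)
    case 0
    have "x0 < N" using x0 S by auto
    then show ?case using x0 by simp
  next
    case (Suc k)
    have "((x0 + k) mod N + 1) mod N = (x0 + Suc k) mod N" by (simp add: mod_Suc_eq)
    then show ?case using cl[OF Suc.IH] by simp
  qed
  have "{..<N} \<subseteq> \<phi> ` D"
  proof
    fix y assume y: "y \<in> {..<N}"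
    have x0N: "x0 < N" using x0 S by auto
    have "(x0 + (y + N - x0)) mod N = y" using y x0N by simp
    then show "y \<in> \<phi> ` D" using it[of "y + N - x0"] by simp
  qed
  then have "N \<le> card (\<phi> ` D)" using card_mono[OF finite_imageI[OF fin]] by fastforce
  also have "\<dots> = card D" using card_image[OF inj] .
  finally show False using c by simp
qed




primrec decf :: "nat list \<Rightarrow> nat \<Rightarrow> nat set \<Rightarrow> (nat \<Rightarrow> nat) \<Rightarrow> nat list" where
  "decf g0 0 D \<phi> = g0"
| "decf g0 (Suc n) D \<phi> = (let N = length g0 + 2 * Suc n; v = (LEAST u. leafE N D \<phi> u)
     in ins (decf g0 n (D - {v}) (remE N \<phi> v)) v (\<phi> v))"

lemma ins_leaf_corr:
  assumes lj: "length j = M" and M: "2 \<le> M" and jp: "\<forall>u\<in>D'. j!(\<phi>' u) = u"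
    and jl: "\<forall>u\<in>D'. balanced_leaf j u \<longleftrightarrow> leafE M D' \<phi>' u"
    and S: "\<phi>' ` D' \<subseteq> {..<M}" and vj: "v \<notin> set j" and vD: "v \<notin> D'" and p: "p \<le> M + 1"
    and M2: "M = 2 \<Longrightarrow> D' = {}"
    and u: "u \<in> insert v D'"
  shows "balanced_leaf (ins j v p) u \<longleftrightarrow> leafE (M+2) (insert v D') (insE M \<phi>' v p) u"
proof (cases "u = v")
  case True
  then show ?thesis using ins_leaf_self[of j p v] leafE_ins(2)[OF S vD p M] lj M p vj by auto
next
  case False
  then have uD: "u \<in> D'" using u by auto
  then have M3: "2 < M" using M2 M by fastforce
  have e1: "balanced_leaf (ins j v p) u \<longleftrightarrow> balanced_leaf j u \<and> u \<noteq> j ! kidx M p"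
    using ins_leaf_other[of j p u v] M3 lj p False by auto
  have e2: "leafE (M+2) (insert v D') (insE M \<phi>' v p) u \<longleftrightarrow> leafE M D' \<phi>' u \<and> \<phi>' u \<noteq> kidx M p"
    using leafE_ins(1)[OF S vD p M uD] .
  have kl: "kidx M p < M" using M p by (auto simp: kidx_def)
  have ul: "\<phi>' u < M" using S uD by auto
  have "balanced_leaf j u \<Longrightarrow> (u \<noteq> j ! kidx M p \<longleftrightarrow> \<phi>' u \<noteq> kidx M p)"
  proof -
    assume bl: "balanced_leaf j u"
    then have c1: "count_list j u = 1" by (simp add: balanced_leaf_iff)
    show ?thesis using count1_unique[OF c1, of "kidx M p" "\<phi>' u"] kl ul lj jp uD by auto
  qed
  then show ?thesis using e1 e2 jl uD by auto
qed

lemma decf_cong: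
  assumes "2 \<le> length g0"
  shows "finite D \<Longrightarrow> card D = n \<Longrightarrow> \<phi>1 ` D \<subseteq> {..<length g0 + 2 * n} \<Longrightarrow> inj_on \<phi>1 D \<Longrightarrow>
    (\<And>u. u \<in> D \<Longrightarrow> \<phi>1 u = \<phi>2 u) \<Longrightarrow> decf g0 n D \<phi>1 = decf g0 n D \<phi>2"
proof (induction n arbitrary: D \<phi>1 \<phi>2)
  case 0
  then show ?case by simp
next
  case (Suc n)
  define N where "N = length g0 + 2 * Suc n"
  have lc: "leafE N D \<phi>1 = leafE N D \<phi>2" using leafE_cong Suc.prems by blast
  have "\<exists>u. leafE N D \<phi>1 u"
    using leafE_exists[of \<phi>1 D N] Suc.prems assms unfolding N_def by fastforce
  then have lv: "leafE N D \<phi>1 (LEAST u. leafE N D \<phi>1 u)" by (rule LeastI_ex)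
  define v where "v = (LEAST u. leafE N D \<phi>2 u)"
  have lv2: "leafE N D \<phi>1 v" using lv lc v_def by simp
  then have vD: "v \<in> D" by (simp add: leafE_def)
  have vv: "\<phi>1 v = \<phi>2 v" using Suc.prems vD by auto
  have N2: "2 < N" unfolding N_def using assms by presburger
  note rp = remE_props[OF Suc.prems(3)[folded N_def] Suc.prems(4) lv2 N2]
  have r: "decf g0 n (D - {v}) (remE N \<phi>1 v) = decf g0 n (D - {v}) (remE N \<phi>2 v)"
  proof (rule Suc.IH)
    show "finite (D - {v})" using Suc.prems by simp
    show "card (D - {v}) = n" using Suc.prems vD by simp
    show "remE N \<phi>1 v ` (D - {v}) \<subseteq> {..<length g0 + 2 * n}" using rp(1) N_def by fastforce
    show "inj_on (remE N \<phi>1 v) (D - {v})" using rp(2) .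
    fix u assume "u \<in> D - {v}"
    then show "remE N \<phi>1 v u = remE N \<phi>2 v u"
      using Suc.prems vv by (auto simp: remE_def)
  qed
  show ?case using r lc vv unfolding decf.simps Let_def N_def[symmetric] v_def by simp
qed


lemma shf_even: "even M \<Longrightarrow> even (shf M p s) \<longleftrightarrow> even s"
  by (auto simp: shf_def)

lemma dec_props:
  assumes g0: "2 \<le> length g0" "even (length g0)" "\<nexists>v. balanced_leaf g0 v"
  shows "finite D \<Longrightarrow> card D = n \<Longrightarrow> D \<inter> set g0 = {} \<Longrightarrow> \<phi> ` D \<subseteq> {..<length g0 + 2 * n} \<Longrightarrow> inj_on \<phi> D \<Longrightarrow>
    length (decf g0 n D \<phi>) = length g0 + 2 * n \<and> set (decf g0 n D \<phi>) = set g0 \<union> D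
    \<and> (\<forall>u\<in>D. decf g0 n D \<phi> ! (\<phi> u) = u)
    \<and> (\<forall>u\<in>D. balanced_leaf (decf g0 n D \<phi>) u \<longleftrightarrow> leafE (length g0 + 2 * n) D \<phi> u)
    \<and> black (decf g0 n D \<phi>) = black g0 \<union> {u\<in>D. even (\<phi> u)}
    \<and> (\<forall>x\<in>set g0. count_list g0 x \<le> count_list (decf g0 n D \<phi>) x)
    \<and> (\<forall>x\<in>set g0. balanced_leaf (decf g0 n D \<phi>) x \<longrightarrow> length g0 = 2 \<and> card (set g0) = 2)"
proof (induction n arbitrary: D \<phi>)
  case 0
  then have "D = {}" by simp
  then show ?case using g0 by simp
next
  case (Suc n)
  define M0 where "M0 = length g0"
  define N where "N = M0 + 2 * Suc n"
  define M where "M = M0 + 2 * n"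
  have NM: "N = M + 2" unfolding N_def M_def by simp
  have M2: "2 \<le> M" unfolding M_def M0_def using g0 by simp
  have N2: "2 < N" using NM M2 by simp
  have S: "\<phi> ` D \<subseteq> {..<N}" using Suc.prems N_def M0_def by simp
  have "\<exists>u. leafE N D \<phi> u"
    using leafE_exists[OF S Suc.prems(5)] Suc.prems(1,2) N2 unfolding N_def by fastforce
  then have lv: "leafE N D \<phi> (LEAST u. leafE N D \<phi> u)" by (rule LeastI_ex)
  define v where "v = (LEAST u. leafE N D \<phi> u)"
  have lv2: "leafE N D \<phi> v" using lv v_def by simp
  then have vD: "v \<in> D" by (simp add: leafE_def)
  define D' where "D' = D - {v}"
  define \<phi>' where "\<phi>' = remE N \<phi> v"
  note rp = remE_props[OF S Suc.prems(5) lv2 N2]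
  have IH: "length (decf g0 n D' \<phi>') = length g0 + 2 * n \<and> set (decf g0 n D' \<phi>') = set g0 \<union> D'
    \<and> (\<forall>u\<in>D'. decf g0 n D' \<phi>' ! (\<phi>' u) = u)
    \<and> (\<forall>u\<in>D'. balanced_leaf (decf g0 n D' \<phi>') u \<longleftrightarrow> leafE (length g0 + 2 * n) D' \<phi>' u)
    \<and> black (decf g0 n D' \<phi>') = black g0 \<union> {u\<in>D'. even (\<phi>' u)}
    \<and> (\<forall>x\<in>set g0. count_list g0 x \<le> count_list (decf g0 n D' \<phi>') x)
    \<and> (\<forall>x\<in>set g0. balanced_leaf (decf g0 n D' \<phi>') x \<longrightarrow> length g0 = 2 \<and> card (set g0) = 2)"
  proof (rule Suc.IH)
    show "finite D'" using Suc.prems D'_def by simp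
    show "card D' = n" using Suc.prems vD D'_def by simp
    show "D' \<inter> set g0 = {}" using Suc.prems D'_def by auto
    show "\<phi>' ` D' \<subseteq> {..<length g0 + 2 * n}" using rp(1) N_def M0_def \<phi>'_def D'_def by fastforce
    show "inj_on \<phi>' D'" using rp(2) \<phi>'_def D'_def by simp
  qed
  define j where "j = decf g0 n D' \<phi>'"
  define p where "p = \<phi> v"
  have G: "decf g0 (Suc n) D \<phi> = ins j v p"
    unfolding decf.simps Let_def j_def p_def D'_def \<phi>'_def v_def N_def M0_def by simp
  have lj: "length j = M" using IH j_def M_def M0_def by simp
  have jne: "j \<noteq> []" using lj M2 by auto
  have pM: "p \<le> M + 1" using S vD NM p_def by auto
  have pM': "p \<le> length j + 1" using pM lj by simp
  have vj: "v \<notin> set j" using IH j_def D'_def Suc.prems(3) vD by auto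
  have vD': "v \<notin> D'" using D'_def by simp
  have Dins: "D = insert v D'" using vD D'_def by auto
  have agree: "\<phi> u = insE M \<phi>' v p u" if "u \<in> D" for u
  proof (cases "u = v")
    case True then show ?thesis by (simp add: insE_def p_def)
  next
    case False
    then show ?thesis using rp(1)[of u] that NM \<phi>'_def p_def by (simp add: insE_def)
  qed
  have lfe: "leafE N D \<phi> = leafE (M+2) (insert v D') (insE M \<phi>' v p)"
    using leafE_cong[of D \<phi> "insE M \<phi>' v p" N] agree Dins NM by simp
  have S': "\<phi>' ` D' \<subseteq> {..<M}" using rp(1) NM \<phi>'_def D'_def by fastforce
  have Mn: "M = 2 \<Longrightarrow> D' = {}"
  proof -
    assume "M = 2"
    then have "n = 0" using M_def M0_def g0 by simp
    moreover have "finite D'" "card D' = n" using Suc.prems vD D'_def by auto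
    ultimately show "D' = {}" by simp
  qed
  have c_len: "length (decf g0 (Suc n) D \<phi>) = length g0 + 2 * Suc n"
    using G lj jne M_def M0_def by simp
  have c_set: "set (decf g0 (Suc n) D \<phi>) = set g0 \<union> D"
  proof -
    have "set (ins j v p) = insert v (set j)" using set_ins[OF jne] .
    also have "set j = set g0 \<union> D'" using IH j_def by simp
    finally show ?thesis using G Dins by auto
  qed
  have c_nth: "\<forall>u\<in>D. decf g0 (Suc n) D \<phi> ! (\<phi> u) = u"
  proof
    fix u assume uD: "u \<in> D"
    show "decf g0 (Suc n) D \<phi> ! (\<phi> u) = u"
    proof (cases "u = v")
      case True
      then show ?thesis using G ins_nth_p[OF jne pM'] p_def by simp
    next
      case False
      then have uD': "u \<in> D'" using uD D'_def by simp
      have "\<phi> u = shf M p (\<phi>' u)" using agree[OF uD] False by (simp add: insE_def)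
      moreover have "\<phi>' u < M" using S' uD' by auto
      ultimately show ?thesis using G ins_nth_shf[OF jne, of p "\<phi>' u" v] pM lj IH j_def uD' by simp
    qed
  qed
  have c_leaf: "\<forall>u\<in>D. balanced_leaf (decf g0 (Suc n) D \<phi>) u \<longleftrightarrow> leafE (length g0 + 2 * Suc n) D \<phi> u"
  proof
    fix u assume uD: "u \<in> D"
    have "balanced_leaf (ins j v p) u \<longleftrightarrow> leafE (M+2) (insert v D') (insE M \<phi>' v p) u"
    proof (rule ins_leaf_corr[OF lj M2 _ _ S' vj vD' pM Mn])
      show "\<forall>u\<in>D'. j ! \<phi>' u = u" using IH j_def by simp
      show "\<forall>u\<in>D'. balanced_leaf j u = leafE M D' \<phi>' u" using IH j_def M_def M0_def by simp
      show "u \<in> insert v D'" using uD Dins by simp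
    qed
    then show "balanced_leaf (decf g0 (Suc n) D \<phi>) u \<longleftrightarrow> leafE (length g0 + 2 * Suc n) D \<phi> u"
      using G lfe N_def M0_def by simp
  qed
  have evM: "even M" using g0 M_def M0_def by simp
  have c_black: "black (decf g0 (Suc n) D \<phi>) = black g0 \<union> {u\<in>D. even (\<phi> u)}"
  proof -
    have b1: "black (decf g0 (Suc n) D \<phi>) = black j \<union> (if even p then {v} else {})"
      using G black_ins[OF jne _ pM'] lj evM by simp
    have b2: "black j = black g0 \<union> {u\<in>D'. even (\<phi>' u)}"
      using IH j_def by simp
    have b3: "even (\<phi>' u) \<longleftrightarrow> even (\<phi> u)" if "u \<in> D'" for u
    proof -
      have "u \<in> D" "u \<noteq> v" using that D'_def by auto
      then have "\<phi> u = shf M p (\<phi>' u)" using agree by (simp add: insE_def)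
      then show ?thesis using shf_even[OF evM] by simp
    qed
    have b4: "{u\<in>D'. even (\<phi>' u)} = {u\<in>D'. even (\<phi> u)}" using b3 by blast
    have b5: "{u\<in>D. even (\<phi> u)} = {u\<in>D'. even (\<phi> u)} \<union> (if even p then {v} else {})"
      using Dins p_def vD' by auto
    show ?thesis unfolding b1 b2 b4 b5 by blast
  qed
  have c_cnt: "\<forall>x\<in>set g0. count_list g0 x \<le> count_list (decf g0 (Suc n) D \<phi>) x"
  proof
    fix x assume xg: "x \<in> set g0"
    have "count_list j x \<le> count_list (ins j v p) x" using count_list_ins[OF jne, of v p x] by simp
    moreover have "count_list g0 x \<le> count_list j x" using IH j_def xg by simp
    ultimately show "count_list g0 x \<le> count_list (decf g0 (Suc n) D \<phi>) x" using G by simp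
  qed
  have c_base: "\<forall>x\<in>set g0. balanced_leaf (decf g0 (Suc n) D \<phi>) x \<longrightarrow> length g0 = 2 \<and> card (set g0) = 2"
  proof (intro ballI impI)
    fix x assume xg: "x \<in> set g0" and bl: "balanced_leaf (decf g0 (Suc n) D \<phi>) x"
    have xv: "x \<noteq> v" using xg vD Suc.prems(3) by auto
    show "length g0 = 2 \<and> card (set g0) = 2"
    proof (cases "2 < M")
      case True
      then have "balanced_leaf j x" using ins_leaf_other[of j p x v] bl G lj pM xv by simp
      moreover have "\<forall>x\<in>set g0. balanced_leaf j x \<longrightarrow> length g0 = 2 \<and> card (set g0) = 2"
        using IH unfolding j_def by blast
      ultimately show ?thesis using xg by blast
    next
      case False
      then have M2': "M = 2" using M2 by simp
      then have n0: "n = 0" and l2: "length g0 = 2" using M_def M0_def g0 by auto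
      then have jg: "j = g0" using j_def by simp
      have c1: "count_list (decf g0 (Suc n) D \<phi>) x = 1" using bl by (simp add: balanced_leaf_iff)
      have "card (set g0) \<noteq> 1"
      proof
        assume "card (set g0) = 1"
        then have sg: "set g0 = {x}" using xg by (metis card_1_singletonE singletonD)
        have "sum (count_list g0) {x} = length g0" using sum_count_set[of g0 "{x}"] sg by simp
        then have "count_list g0 x = 2" using l2 by simp
        then show False using c_cnt c1 xg by fastforce
      qed
      moreover have "card (set g0) \<le> 2" using card_length[of g0] l2 by simp
      moreover have "0 < card (set g0)" using xg by (auto simp: card_gt_0_iff)
      ultimately show ?thesis using l2 by linarith
    qed
  qed
  show ?case using c_len c_set c_nth c_leaf c_black c_cnt c_base by blast
qed




declare seed.simps[simp del] decf.simps(2)[simp del]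

lemma decf_step:
  assumes g0: "2 \<le> length g0"
    and D: "finite D" "card D = Suc n" "\<phi> ` D \<subseteq> {..<length g0 + 2 * Suc n}" "inj_on \<phi> D"
  defines "N \<equiv> length g0 + 2 * Suc n"
  defines "v \<equiv> (LEAST u. leafE N D \<phi> u)"
  shows "leafE N D \<phi> v" "v \<in> D"
    "decf g0 (Suc n) D \<phi> = ins (decf g0 n (D - {v}) (remE N \<phi> v)) v (\<phi> v)"
    "finite (D - {v})" "card (D - {v}) = n"
    "remE N \<phi> v ` (D - {v}) \<subseteq> {..<length g0 + 2 * n}" "inj_on (remE N \<phi> v) (D - {v})"
    "\<phi> v \<le> length g0 + 2 * n + 1"
    "\<And>u. u \<in> D - {v} \<Longrightarrow> \<phi> u = shf (length g0 + 2 * n) (\<phi> v) (remE N \<phi> v u)"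
proof -
  have N2: "2 < N" unfolding N_def using g0 by presburger
  have S: "\<phi> ` D \<subseteq> {..<N}" using D N_def by simp
  have "\<exists>u. leafE N D \<phi> u"
    using leafE_exists[OF S D(4) _ D(1)] D(2) N2 unfolding N_def by fastforce
  then show lv: "leafE N D \<phi> v" unfolding v_def by (rule LeastI_ex)
  then show vD: "v \<in> D" by (simp add: leafE_def)
  show "decf g0 (Suc n) D \<phi> = ins (decf g0 n (D - {v}) (remE N \<phi> v)) v (\<phi> v)"
    unfolding decf.simps Let_def N_def v_def by simp
  show "finite (D - {v})" "card (D - {v}) = n" using D vD by auto
  note rp = remE_props[OF S D(4) lv N2]
  have NM: "N - 2 = length g0 + 2 * n" unfolding N_def by simp
  show "remE N \<phi> v ` (D - {v}) \<subseteq> {..<length g0 + 2 * n}" using rp(1) NM by fastforce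
  show "inj_on (remE N \<phi> v) (D - {v})" using rp(2) .
  show "\<phi> v \<le> length g0 + 2 * n + 1" using S vD N_def by auto
  show "\<And>u. u \<in> D - {v} \<Longrightarrow> \<phi> u = shf (length g0 + 2 * n) (\<phi> v) (remE N \<phi> v u)"
  proof -
    fix u assume "u \<in> D - {v}"
    then show "\<phi> u = shf (length g0 + 2 * n) (\<phi> v) (remE N \<phi> v u)" using rp(1)[of u] NM by simp
  qed
qed

lemma seed_unfold: "seed G = (if \<exists>v. balanced_leaf G v then seed (remove_leaf G (LEAST v. balanced_leaf G v)) else G)"
  by (rule seed.simps)

lemma leaf_in_set: "balanced_leaf G v \<Longrightarrow> v \<in> set G"
proof -
  assume "balanced_leaf G v"
  then have "count_list G v = 1" by (simp add: balanced_leaf_iff)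
  then show ?thesis by (metis count_notin zero_neq_one)
qed

lemma remove_leaf_props:
  assumes "balanced_leaf G v"
  shows "length (remove_leaf G v) + 2 = length G" "set G = insert v (set (remove_leaf G v))"
    "v \<notin> set (remove_leaf G v)"
proof -
  obtain t where t: "t < length G" "G!t = v" using leaf_in_set[OF assms] by (auto simp: in_set_conv_nth)
  note ld = leaf_decomp[OF assms t]
  show "length (remove_leaf G v) + 2 = length G" "v \<notin> set (remove_leaf G v)" using ld by auto
  have jne: "remove_leaf G v \<noteq> []" and eqG: "G = ins (remove_leaf G v) v t" using ld by blast+
  have "set (ins (remove_leaf G v) v t) = insert v (set (remove_leaf G v))" by (rule set_ins[OF jne])
  then show "set G = insert v (set (remove_leaf G v))" using eqG by metis
qed

lemma seed_len_set: "length (seed G) \<le> length G \<and> set (seed G) \<subseteq> set G \<and>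
   ((\<exists>v. balanced_leaf G v) \<longrightarrow> length (seed G) < length G)"
proof (induction G rule: seed.induct)
  case (1 i)
  show ?case
  proof (cases "\<exists>v. balanced_leaf i v")
    case True
    define w where "w = (LEAST v. balanced_leaf i v)"
    have bw: "balanced_leaf i w" using True unfolding w_def by (rule LeastI_ex)
    have e: "seed i = seed (remove_leaf i w)" using True seed_unfold[of i] w_def by simp
    note r = remove_leaf_props[OF bw]
    have "length (seed (remove_leaf i w)) \<le> length (remove_leaf i w) \<and> set (seed (remove_leaf i w)) \<subseteq> set (remove_leaf i w)"
      using 1 True w_def by simp
    then show ?thesis using e r by auto
  next
    case False
    then show ?thesis using seed_unfold[of i] by simp
  qed
qed


lemma dec_seed:
  assumes g0: "2 \<le> length g0" "even (length g0)" "\<nexists>v. balanced_leaf g0 v"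
  shows "finite D \<Longrightarrow> card D = n \<Longrightarrow> D \<inter> set g0 = {} \<Longrightarrow> \<phi> ` D \<subseteq> {..<length g0 + 2 * n} \<Longrightarrow> inj_on \<phi> D \<Longrightarrow>
    (length g0 = 2 \<and> card (set g0) = 2 \<longrightarrow> (\<forall>x\<in>set g0. \<forall>u\<in>D. u < x)) \<Longrightarrow> seed (decf g0 n D \<phi>) = g0"
proof (induction n arbitrary: D \<phi>)
  case 0
  then show ?case using g0(3) seed_unfold[of g0] by simp
next
  case (Suc n)
  define N where "N = length g0 + 2 * Suc n"
  define v where "v = (LEAST u. leafE N D \<phi> u)"
  note st = decf_step[OF g0(1) Suc.prems(1,2) Suc.prems(4) Suc.prems(5), folded N_def, folded v_def]
  note dp = dec_props[OF g0 Suc.prems(1-5)]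
  define G where "G = decf g0 (Suc n) D \<phi>"
  define D' where "D' = D - {v}"
  define \<phi>' where "\<phi>' = remE N \<phi> v"
  define j where "j = decf g0 n D' \<phi>'"
  have dj: "D' \<inter> set g0 = {}" using Suc.prems(3) D'_def by auto
  note dp' = dec_props[OF g0 st(4,5)[folded D'_def] dj st(6,7)[folded D'_def \<phi>'_def], folded j_def]
  have Gj: "G = ins j v (\<phi> v)" using st(3) G_def j_def D'_def \<phi>'_def by simp
  have blv: "balanced_leaf G v" using dp st(1,2) G_def N_def by simp
  have least: "(LEAST u. balanced_leaf G u) = v"
  proof (rule Least_equality)
    show "balanced_leaf G v" by (rule blv)
    fix y assume yb: "balanced_leaf G y"
    then have "y \<in> set G" by (rule leaf_in_set)
    then have "y \<in> set g0 \<or> y \<in> D" using dp G_def by simp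
    then show "v \<le> y"
    proof
      assume yg: "y \<in> set g0"
      then have "length g0 = 2 \<and> card (set g0) = 2" using dp yg yb G_def by auto
      then show "v \<le> y" using Suc.prems(6) yg st(2) by fastforce
    next
      assume yD: "y \<in> D"
      then have "leafE N D \<phi> y" using dp yD yb G_def N_def by auto
      then show "v \<le> y" unfolding v_def by (rule Least_le)
    qed
  qed
  have lj: "length j = length g0 + 2 * n" using dp' by simp
  have vj: "v \<notin> set j" using dp' Suc.prems(3) st(2) D'_def by auto
  have "seed G = seed (remove_leaf G v)" using seed_unfold[of G] blv least by auto
  also have "remove_leaf G v = j" using Gj remove_leaf_ins[of j "\<phi> v" v] lj st(8) vj g0(1) by simp
  also have "seed j = g0"
  proof -
    have "\<phi>' ` D' \<subseteq> {..<length g0 + 2 * n}" "inj_on \<phi>' D'" using st(6,7) D'_def \<phi>'_def by auto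
    moreover have "length g0 = 2 \<and> card (set g0) = 2 \<longrightarrow> (\<forall>x\<in>set g0. \<forall>u\<in>D'. u < x)"
      using Suc.prems(6) D'_def by auto
    ultimately show ?thesis using Suc.IH[of D' \<phi>'] st(4,5) dj D'_def j_def by simp
  qed
  finally show ?case using G_def by simp
qed


lemma dec_inj:
  assumes g0: "2 \<le> length g0" "even (length g0)" "\<nexists>v. balanced_leaf g0 v"
  shows "finite D \<Longrightarrow> card D = n \<Longrightarrow> D \<inter> set g0 = {} \<Longrightarrow>
    \<phi>1 ` D \<subseteq> {..<length g0 + 2 * n} \<Longrightarrow> inj_on \<phi>1 D \<Longrightarrow>
    \<phi>2 ` D \<subseteq> {..<length g0 + 2 * n} \<Longrightarrow> inj_on \<phi>2 D \<Longrightarrow>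
    decf g0 n D \<phi>1 = decf g0 n D \<phi>2 \<Longrightarrow> \<forall>u\<in>D. \<phi>1 u = \<phi>2 u"
proof (induction n arbitrary: D \<phi>1 \<phi>2)
  case 0
  then show ?case by simp
next
  case (Suc n)
  define N where "N = length g0 + 2 * Suc n"
  define G where "G = decf g0 (Suc n) D \<phi>1"
  note dp1 = dec_props[OF g0 Suc.prems(1-5), folded G_def N_def]
  note dp2 = dec_props[OF g0 Suc.prems(1-3) Suc.prems(6,7), folded Suc.prems(8), folded G_def N_def]
  have lfeq: "leafE N D \<phi>1 = leafE N D \<phi>2"
  proof
    fix u show "leafE N D \<phi>1 u = leafE N D \<phi>2 u"
    proof (cases "u \<in> D")
      case True
      then show ?thesis using dp1 dp2 by simp
    next
      case False
      then show ?thesis by (simp add: leafE_def)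
    qed
  qed
  define v where "v = (LEAST u. leafE N D \<phi>1 u)"
  have v2: "v = (LEAST u. leafE N D \<phi>2 u)" using lfeq v_def by simp
  note st1 = decf_step[OF g0(1) Suc.prems(1,2) Suc.prems(4) Suc.prems(5), folded N_def, folded v_def]
  note st2 = decf_step[OF g0(1) Suc.prems(1,2) Suc.prems(6) Suc.prems(7), folded N_def, folded v2]
  define D' where "D' = D - {v}"
  have dj: "D' \<inter> set g0 = {}" using Suc.prems(3) D'_def by auto
  define j1 where "j1 = decf g0 n D' (remE N \<phi>1 v)"
  define j2 where "j2 = decf g0 n D' (remE N \<phi>2 v)"
  note dq1 = dec_props[OF g0 st1(4,5)[folded D'_def] dj st1(6,7)[folded D'_def], folded j1_def]
  note dq2 = dec_props[OF g0 st2(4,5)[folded D'_def] dj st2(6,7)[folded D'_def], folded j2_def]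
  have bl: "balanced_leaf G v" using dp1 st1(1,2) by simp
  then have c1: "count_list G v = 1" by (simp add: balanced_leaf_iff)
  have pp: "\<phi>1 v = \<phi>2 v"
  proof (rule count1_unique[OF c1])
    show "\<phi>1 v < length G" "\<phi>2 v < length G" using Suc.prems(4,6) st1(2) dp1 by (auto simp: N_def)
    show "G ! \<phi>1 v = v" "G ! \<phi>2 v = v" using dp1 dp2 st1(2) by auto
  qed
  have G1: "G = ins j1 v (\<phi>1 v)" using st1(3) G_def j1_def D'_def by simp
  have G2: "G = ins j2 v (\<phi>1 v)" using st2(3) G_def j2_def D'_def Suc.prems(8) pp by simp
  have "j1 = remove_leaf G v"
    using G1 remove_leaf_ins[of j1 "\<phi>1 v" v] dq1 st1(8) Suc.prems(3) st1(2) g0(1) D'_def by auto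
  moreover have "j2 = remove_leaf G v"
    using G2 remove_leaf_ins[of j2 "\<phi>1 v" v] dq2 st1(8) Suc.prems(3) st1(2) g0(1) D'_def by auto
  ultimately have jj: "j1 = j2" by simp
  have IH: "\<forall>u\<in>D'. remE N \<phi>1 v u = remE N \<phi>2 v u"
    using Suc.IH[OF st1(4,5)[folded D'_def] dj st1(6,7)[folded D'_def] st2(6,7)[folded D'_def]] jj j1_def j2_def by simp
  show ?case
  proof
    fix u assume uD: "u \<in> D"
    show "\<phi>1 u = \<phi>2 u"
    proof (cases "u = v")
      case True then show ?thesis using pp by simp
    next
      case False
      then have "u \<in> D - {v}" using uD by simp
      then show ?thesis using st1(9) st2(9) IH pp D'_def by metis
    qed
  qed
qed


lemma seed_noleaf_len: "seed G = g0 \<Longrightarrow> length G = length g0 \<Longrightarrow> \<not> (\<exists>v. balanced_leaf G v)"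
proof
  assume a: "seed G = g0" "length G = length g0" and "\<exists>v. balanced_leaf G v"
  then have "length (seed G) < length G" using seed_len_set[of G] by blast
  then show False using a by simp
qed

lemma seed_noleaf: "\<not> (\<exists>v. balanced_leaf G v) \<Longrightarrow> seed G = G"
  by (subst seed_unfold) auto

lemma seed_leaf: "\<exists>v. balanced_leaf G v \<Longrightarrow> seed G = seed (remove_leaf G (LEAST v. balanced_leaf G v))"
  by (subst seed_unfold) auto

lemma dec_surj:
  assumes g0: "2 \<le> length g0" "even (length g0)" "\<nexists>v. balanced_leaf g0 v"
  shows "finite D \<Longrightarrow> card D = n \<Longrightarrow> D \<inter> set g0 = {} \<Longrightarrow> length G = length g0 + 2 * n \<Longrightarrow>
    set G = set g0 \<union> D \<Longrightarrow> seed G = g0 \<Longrightarrow>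
    \<exists>\<phi>. \<phi> \<in> D \<rightarrow>\<^sub>E {..<length g0 + 2 * n} \<and> inj_on \<phi> D \<and> decf g0 n D \<phi> = G"
proof (induction n arbitrary: D G)
  case 0
  then have D0: "D = {}" by simp
  have "\<not> (\<exists>v. balanced_leaf G v)" using seed_noleaf_len 0 by simp
  then have "G = g0" using seed_noleaf 0 by metis
  then show ?case using D0 by (intro exI[of _ "\<lambda>_. undefined"]) simp
next
  case (Suc n)
  define N where "N = length g0 + 2 * Suc n"
  define M where "M = length g0 + 2 * n"
  have NM: "N = M + 2" unfolding N_def M_def by simp
  have M2: "2 \<le> M" using g0 M_def by simp
  have ex: "\<exists>v. balanced_leaf G v"
  proof (rule ccontr)
    assume "\<not> (\<exists>v. balanced_leaf G v)"
    then have "seed G = G" using seed_noleaf by blast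
    then show False using Suc.prems(4,6) by simp
  qed
  define v where "v = (LEAST v. balanced_leaf G v)"
  have blv: "balanced_leaf G v" using ex unfolding v_def by (rule LeastI_ex)
  obtain t where t: "t < length G" "G!t = v" using leaf_in_set[OF blv] by (auto simp: in_set_conv_nth)
  note ld = leaf_decomp[OF blv t]
  define j where "j = remove_leaf G v"
  note rp = remove_leaf_props[OF blv, folded j_def]
  have sj: "seed j = g0" using seed_leaf[OF ex] Suc.prems(6) j_def v_def by simp
  have "set g0 \<subseteq> set j" using seed_len_set[of j] sj by simp
  then have vg: "v \<notin> set g0" using rp(3) by auto
  have vD: "v \<in> D" using leaf_in_set[OF blv] Suc.prems(5) vg by simp
  define D' where "D' = D - {v}"
  have fD': "finite D'" "card D' = n" using Suc.prems(1,2) vD D'_def by auto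
  have dj: "D' \<inter> set g0 = {}" using Suc.prems(3) D'_def by auto
  have lj: "length j = M" using rp(1) Suc.prems(4) M_def by simp
  have setj: "set j = set g0 \<union> D'" using rp(2,3) Suc.prems(5) vg D'_def by auto
  obtain \<phi>' where \<phi>': "\<phi>' \<in> D' \<rightarrow>\<^sub>E {..<M}" "inj_on \<phi>' D'" "decf g0 n D' \<phi>' = j"
    using Suc.IH[OF fD' dj _ setj sj] lj M_def by auto
  have S': "\<phi>' ` D' \<subseteq> {..<M}" using \<phi>'(1) by auto
  note dq = dec_props[OF g0 fD' dj S'[unfolded M_def] \<phi>'(2), folded M_def, unfolded \<phi>'(3)]
  have Gj: "G = ins j v t" using ld j_def by simp
  have tM: "t \<le> M + 1" using t Suc.prems(4) M_def by simp
  have vj: "v \<notin> set j" using rp(3) .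
  have vD': "v \<notin> D'" using D'_def by simp
  have Dins: "D = insert v D'" using vD D'_def by auto
  define \<phi> where "\<phi> = restrict (insE M \<phi>' v t) D"
  note ii = insE_inj[OF S' \<phi>'(2) vD' tM]
  have \<phi>D: "\<phi> \<in> D \<rightarrow>\<^sub>E {..<N}" using ii(2) Dins NM unfolding \<phi>_def by auto
  have \<phi>inj: "inj_on \<phi> D" using ii(1) Dins unfolding \<phi>_def by (simp add: inj_on_def)
  have \<phi>S: "\<phi> ` D \<subseteq> {..<length g0 + 2 * Suc n}" using \<phi>D N_def by auto
  have agree: "\<phi> u = insE M \<phi>' v t u" if "u \<in> D" for u using that \<phi>_def by simp
  have lfe: "leafE N D \<phi> = leafE (M+2) (insert v D') (insE M \<phi>' v t)"
    using leafE_cong[of D \<phi> "insE M \<phi>' v t" N] agree Dins NM by simp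
  have Mn: "M = 2 \<Longrightarrow> D' = {}"
  proof -
    assume "M = 2"
    then have "n = 0" using M_def g0 by simp
    then show "D' = {}" using fD' by simp
  qed
  have corr: "balanced_leaf G u \<longleftrightarrow> leafE N D \<phi> u" if "u \<in> D" for u
  proof -
    have "balanced_leaf (ins j v t) u \<longleftrightarrow> leafE (M+2) (insert v D') (insE M \<phi>' v t) u"
    proof (rule ins_leaf_corr[OF lj M2 _ _ S' vj vD' tM Mn])
      show "\<forall>u\<in>D'. j ! \<phi>' u = u" using dq by simp
      show "\<forall>u\<in>D'. balanced_leaf j u = leafE M D' \<phi>' u" using dq by simp
      show "u \<in> insert v D'" using that Dins by simp
    qed
    then show ?thesis using Gj lfe by simp
  qed
  note st = decf_step[OF g0(1) Suc.prems(1,2) \<phi>S \<phi>inj, folded N_def]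
  have lv: "(LEAST u. leafE N D \<phi> u) = v"
  proof (rule Least_equality)
    show "leafE N D \<phi> v" using corr[OF vD] blv by simp
    fix y assume "leafE N D \<phi> y"
    then have "y \<in> D" "balanced_leaf G y" using corr by (auto simp: leafE_def)
    then show "v \<le> y" unfolding v_def by (simp add: Least_le)
  qed
  have \<phi>v: "\<phi> v = t" using vD \<phi>_def by (simp add: insE_def)
  have cong: "decf g0 n D' \<phi>' = decf g0 n D' (remE N \<phi> v)"
  proof (rule decf_cong[OF g0(1) fD' S'[unfolded M_def] \<phi>'(2)])
    fix u assume uD: "u \<in> D'"
    then have "u \<in> D" "u \<noteq> v" using D'_def by auto
    then have "\<phi> u = shf M t (\<phi>' u)" using agree by (simp add: insE_def)
    moreover have "\<phi>' u < M" using S' uD by auto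
    ultimately show "\<phi>' u = remE N \<phi> v u" using unshf_shf[of "\<phi>' u" M t] tM \<phi>v NM by (simp add: remE_def)
  qed
  have "decf g0 (Suc n) D \<phi> = G"
    using st(3) lv \<phi>v cong \<phi>'(3) Gj D'_def by simp
  then show ?case using \<phi>D \<phi>inj N_def by blast
qed




lemma prod_fact: "b \<le> m \<Longrightarrow> fact (m - b) * (\<Prod>i\<in>{0..<b}. (m - i)) = (fact m :: nat)"
proof (induction b)
  case 0 then show ?case by simp
next
  case (Suc b)
  have e: "m - b = Suc (m - Suc b)" using Suc.prems by arith
  have f: "fact (m - b) = (m - b) * (fact (m - Suc b) :: nat)"
    by (simp only: e fact_Suc) simp
  have p: "(\<Prod>i\<in>{0..<Suc b}. (m - i)) = (\<Prod>i\<in>{0..<b}. (m - i)) * (m - b)"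
    by (simp add: prod.atLeast0_lessThan_Suc)
  have "fact (m - Suc b) * (\<Prod>i\<in>{0..<Suc b}. (m - i)) = fact (m - b) * (\<Prod>i\<in>{0..<b}. (m - i))"
    unfolding p f by (simp only: mult.assoc mult.commute mult.left_commute)
  then show ?case using Suc by simp
qed

lemma card_evens: "card {x. x < 2 * m \<and> even x} = (m::nat)"
proof -
  have "{x. x < 2 * m \<and> even x} = (\<lambda>i. 2 * i) ` {..<m}"
  proof
    show "{x. x < 2 * m \<and> even x} \<subseteq> (\<lambda>i. 2 * i) ` {..<m}"
    proof
      fix x assume "x \<in> {x. x < 2 * m \<and> even x}"
      then have x: "x < 2 * m" "even x" by auto
      then obtain k where k: "x = 2 * k" by (elim evenE)
      then have "k < m" using x by simp
      then show "x \<in> (\<lambda>i. 2 * i) ` {..<m}" using k by blast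
    qed
    show "(\<lambda>i. 2 * i) ` {..<m} \<subseteq> {x. x < 2 * m \<and> even x}" by auto
  qed
  moreover have "inj_on (\<lambda>i::nat. 2 * i) {..<m}" by (simp add: inj_on_def)
  ultimately show ?thesis by (simp add: card_image)
qed

lemma card_odds: "card {x. x < 2 * m \<and> odd x} = (m::nat)"
proof -
  have "{x. x < 2 * m \<and> odd x} = (\<lambda>i. 2 * i + 1) ` {..<m}"
  proof
    show "{x. x < 2 * m \<and> odd x} \<subseteq> (\<lambda>i. 2 * i + 1) ` {..<m}"
    proof
      fix x assume "x \<in> {x. x < 2 * m \<and> odd x}"
      then have x: "x < 2 * m" "odd x" by auto
      then obtain k where k: "x = 2 * k + 1" by (elim oddE)
      then have "k < m" using x by simp
      then show "x \<in> (\<lambda>i. 2 * i + 1) ` {..<m}" using k by blast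
    qed
    show "(\<lambda>i. 2 * i + 1) ` {..<m} \<subseteq> {x. x < 2 * m \<and> odd x}" by auto
  qed
  moreover have "inj_on (\<lambda>i::nat. 2 * i + 1) {..<m}" by (simp add: inj_on_def)
  ultimately show ?thesis by (simp add: card_image)
qed

lemma card_inj_ext: "finite A \<Longrightarrow> finite C \<Longrightarrow> card {f \<in> A \<rightarrow>\<^sub>E C. inj_on f A} = (\<Prod>i\<in>{0..<card A}. card C - i)"
  using card_inj_on_subset_funcset[of A C A] by simp

lemma count_P:
  fixes B W :: "nat set" and m :: nat
  assumes fB: "finite B" and fW: "finite W" and BW: "B \<inter> W = {}"
  defines "P \<equiv> {\<phi> \<in> (B \<union> W) \<rightarrow>\<^sub>E {..<2*m}. inj_on \<phi> (B \<union> W) \<and> (\<forall>u\<in>B \<union> W. even (\<phi> u) \<longleftrightarrow> u \<in> B)}"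
  shows "card P = (\<Prod>i\<in>{0..<card B}. m - i) * (\<Prod>i\<in>{0..<card W}. m - i)"
proof -
  define Ev where "Ev = {x. x < 2 * m \<and> even x}"
  define Od where "Od = {x. x < 2 * m \<and> odd x}"
  define IB :: "(nat \<Rightarrow> nat) set" where "IB = {f \<in> B \<rightarrow>\<^sub>E Ev. inj_on f B}"
  define IW :: "(nat \<Rightarrow> nat) set" where "IW = {f \<in> W \<rightarrow>\<^sub>E Od. inj_on f W}"
  define F :: "(nat \<Rightarrow> nat) \<Rightarrow> (nat \<Rightarrow> nat) \<times> (nat \<Rightarrow> nat)" where "F = (\<lambda>\<phi>. (restrict \<phi> B, restrict \<phi> W))"
  have injF: "inj_on F P"
  proof (rule inj_onI)
    fix \<phi>1 \<phi>2 assume a: "\<phi>1 \<in> P" "\<phi>2 \<in> P" "F \<phi>1 = F \<phi>2"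
    have "\<phi>1 u = \<phi>2 u" if "u \<in> B \<union> W" for u
    proof -
      have "restrict \<phi>1 B u = restrict \<phi>2 B u" "restrict \<phi>1 W u = restrict \<phi>2 W u"
        using a(3) unfolding F_def by auto
      then show ?thesis using that by auto
    qed
    then show "\<phi>1 = \<phi>2" using a(1,2) unfolding P_def by (auto intro: PiE_ext)
  qed
  have img: "F ` P = IB \<times> IW"
  proof
    show "F ` P \<subseteq> IB \<times> IW"
    proof
      fix y assume "y \<in> F ` P"
      then obtain \<phi> where \<phi>: "\<phi> \<in> P" "y = F \<phi>" by auto
      have p1: "\<forall>u\<in>B \<union> W. \<phi> u < 2 * m" "inj_on \<phi> (B \<union> W)" "\<forall>u\<in>B \<union> W. even (\<phi> u) \<longleftrightarrow> u \<in> B"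
        using \<phi>(1) unfolding P_def by (auto simp: PiE_iff)
      have "restrict \<phi> B \<in> B \<rightarrow>\<^sub>E Ev" unfolding restrict_PiE_iff Ev_def using p1 by auto
      moreover have "inj_on (restrict \<phi> B) B"
        using inj_on_subset[OF p1(2), of B] by (simp add: inj_on_def)
      ultimately have "restrict \<phi> B \<in> IB" unfolding IB_def by simp
      have "restrict \<phi> W \<in> W \<rightarrow>\<^sub>E Od" unfolding restrict_PiE_iff Od_def using p1 BW by auto
      moreover have "inj_on (restrict \<phi> W) W"
        using inj_on_subset[OF p1(2), of W] by (simp add: inj_on_def)
      ultimately have "restrict \<phi> W \<in> IW" unfolding IW_def by simp
      show "y \<in> IB \<times> IW" using \<open>restrict \<phi> B \<in> IB\<close> \<open>restrict \<phi> W \<in> IW\<close> \<phi>(2) F_def by simp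
    qed
    show "IB \<times> IW \<subseteq> F ` P"
    proof
      fix y assume y: "y \<in> IB \<times> IW"
      then obtain f h where fh: "y = (f, h)" "f \<in> IB" "h \<in> IW" by auto
      define \<phi> where "\<phi> = (\<lambda>u. if u \<in> B then f u else h u)"
      have fB': "\<forall>u\<in>B. f u < 2 * m \<and> even (f u)" "f \<in> extensional B" "inj_on f B"
        using fh(2) unfolding IB_def Ev_def by (auto simp: PiE_iff)
      have hW': "\<forall>u\<in>W. h u < 2 * m \<and> odd (h u)" "h \<in> extensional W" "inj_on h W"
        using fh(3) unfolding IW_def Od_def by (auto simp: PiE_iff)
      have "\<phi> \<in> (B \<union> W) \<rightarrow>\<^sub>E {..<2*m}"
        using fB' hW' unfolding \<phi>_def by (auto simp: PiE_iff extensional_def)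
      moreover have "inj_on \<phi> (B \<union> W)"
      proof (rule inj_onI)
        fix a b assume ab: "a \<in> B \<union> W" "b \<in> B \<union> W" "\<phi> a = \<phi> b"
        show "a = b"
        proof (cases "a \<in> B"; cases "b \<in> B")
          assume "a \<in> B" "b \<in> B"
          then show "a = b" using ab(3) fB'(3) unfolding \<phi>_def inj_on_def by simp
        next
          assume "a \<in> B" "b \<notin> B"
          then have "b \<in> W" using ab by simp
          then show "a = b" using ab(3) fB'(1) hW'(1) \<open>a \<in> B\<close> \<open>b \<notin> B\<close> unfolding \<phi>_def by force
        next
          assume "a \<notin> B" "b \<in> B"
          then have "a \<in> W" using ab by simp
          then show "a = b" using ab(3) fB'(1) hW'(1) \<open>a \<notin> B\<close> \<open>b \<in> B\<close> unfolding \<phi>_def by force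
        next
          assume "a \<notin> B" "b \<notin> B"
          then have "a \<in> W" "b \<in> W" using ab by auto
          then show "a = b" using ab(3) hW'(3) \<open>a \<notin> B\<close> \<open>b \<notin> B\<close> unfolding \<phi>_def inj_on_def by simp
        qed
      qed
      moreover have "\<forall>u\<in>B \<union> W. even (\<phi> u) \<longleftrightarrow> u \<in> B"
        using fB' hW' BW unfolding \<phi>_def by auto
      ultimately have "\<phi> \<in> P" unfolding P_def by simp
      moreover have "F \<phi> = (f, h)"
      proof -
        have "restrict \<phi> B = f" using fB'(2) unfolding \<phi>_def by (auto simp: extensional_def)
        moreover have "restrict \<phi> W = h"
        proof
          fix u show "restrict \<phi> W u = h u"
          proof (cases "u \<in> W")
            case True
            then have "u \<notin> B" using BW by auto
            then show ?thesis using True unfolding \<phi>_def by simp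
          next
            case False
            then show ?thesis using hW'(2) by (simp add: extensional_def)
          qed
        qed
        ultimately show ?thesis unfolding F_def by simp
      qed
      ultimately show "y \<in> F ` P" using fh(1) by (metis image_eqI)
    qed
  qed
  have "card P = card (IB \<times> IW)" using card_image[OF injF] img by simp
  also have "\<dots> = card IB * card IW" by (simp add: card_cartesian_product)
  also have "card IB = (\<Prod>i\<in>{0..<card B}. m - i)"
    unfolding IB_def using card_inj_ext[OF fB, of Ev] card_evens[of m] Ev_def by simp
  also have "card IW = (\<Prod>i\<in>{0..<card W}. m - i)"
    unfolding IW_def using card_inj_ext[OF fW, of Od] card_odds[of m] Od_def by simp
  finally show ?thesis .
qed




lemma black_sub: "black G \<subseteq> set G"
  using black_memE nth_mem by fastforce

lemma main2:
  fixes B' W' :: "nat set" and l0 :: nat and V0 :: "nat set" and g0 :: "nat list"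
  assumes fB: "finite B'" and fW: "finite W'" and BW: "B' \<inter> W' = {}"
    and g0c: "g0 \<in> circuits V0 (2 * l0)" and nl: "\<nexists>v. balanced_leaf g0 v"
    and disj: "V0 \<inter> (B' \<union> W') = {}"
    and ord: "l0 = 1 \<and> card V0 = 2 \<longrightarrow> (\<forall>v \<in> V0. \<forall>u \<in> B' \<union> W'. u < v)"
  shows "real (seed_count V0 g0 l0 B' W') =
         fact (l0 + card B' + card W') ^ 2 / (fact (l0 + card B') * fact (l0 + card W'))"
proof -
  have lg: "length g0 = 2 * l0" and l1: "1 \<le> 2 * l0" and sg: "set g0 = V0"
    using g0c unfolding circuits_def by auto
  have g2: "2 \<le> length g0" using lg l1 by simp
  have ge: "even (length g0)" using lg by simp
  define D where "D = B' \<union> W'"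
  define n where "n = card D"
  have fD: "finite D" using fB fW D_def by simp
  have nBW: "n = card B' + card W'" using card_Un_disjoint[OF fB fW BW] n_def D_def by simp
  define m where "m = l0 + n"
  have Nm: "length g0 + 2 * n = 2 * m" using lg m_def by simp
  have dj: "D \<inter> set g0 = {}" using disj sg D_def by auto
  have ordD: "length g0 = 2 \<and> card (set g0) = 2 \<longrightarrow> (\<forall>x\<in>set g0. \<forall>u\<in>D. u < x)"
    using ord lg sg D_def by auto
  define P where "P = {\<phi> \<in> (B' \<union> W') \<rightarrow>\<^sub>E {..<2*m}. inj_on \<phi> (B' \<union> W') \<and> (\<forall>u\<in>B' \<union> W'. even (\<phi> u) \<longleftrightarrow> u \<in> B')}"
  define T where "T = {g \<in> circuits (V0 \<union> (B' \<union> W')) (2 * l0 + 2 * (card B' + card W')). seed g = g0 \<and> black g \<inter> (B' \<union> W') = B'}"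
  have sc: "seed_count V0 g0 l0 B' W' = card T" unfolding seed_count_def T_def by simp
  have bg0: "black g0 \<inter> D = {}" using black_sub[of g0] dj by auto
  have blk: "black (decf g0 n D \<phi>) \<inter> D = {u\<in>D. even (\<phi> u)}"
    if "\<phi> ` D \<subseteq> {..<length g0 + 2 * n}" "inj_on \<phi> D" for \<phi>
    using dec_props[OF g2 ge nl fD n_def[symmetric] dj that] bg0 by auto
  have TP: "T = decf g0 n D ` P"
  proof
    show "T \<subseteq> decf g0 n D ` P"
    proof
      fix g assume gT: "g \<in> T"
      then have lgg: "length g = length g0 + 2 * n" and sgg: "set g = set g0 \<union> D"
        and sdg: "seed g = g0" and bk: "black g \<inter> D = B'"
        unfolding T_def circuits_def using lg nBW sg D_def by auto
      obtain \<phi> where \<phi>: "\<phi> \<in> D \<rightarrow>\<^sub>E {..<length g0 + 2 * n}" "inj_on \<phi> D" "decf g0 n D \<phi> = g"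
        using dec_surj[OF g2 ge nl fD n_def[symmetric] dj lgg sgg sdg] by blast
      have S: "\<phi> ` D \<subseteq> {..<length g0 + 2 * n}" using \<phi>(1) by auto
      have "{u\<in>D. even (\<phi> u)} = B'" using blk[OF S \<phi>(2)] \<phi>(3) bk by simp
      then have "\<forall>u\<in>D. even (\<phi> u) \<longleftrightarrow> u \<in> B'" by auto
      then have "\<phi> \<in> P" unfolding P_def using \<phi>(1,2) Nm D_def by simp
      then show "g \<in> decf g0 n D ` P" using \<phi>(3) by (metis image_eqI)
    qed
    show "decf g0 n D ` P \<subseteq> T"
    proof
      fix g assume "g \<in> decf g0 n D ` P"
      then obtain \<phi> where \<phi>P: "\<phi> \<in> P" and g: "g = decf g0 n D \<phi>" by auto
      have \<phi>1: "\<phi> ` D \<subseteq> {..<length g0 + 2 * n}" "inj_on \<phi> D" "\<forall>u\<in>D. even (\<phi> u) \<longleftrightarrow> u \<in> B'"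
        using \<phi>P Nm unfolding P_def D_def by auto
      note dp = dec_props[OF g2 ge nl fD n_def[symmetric] dj \<phi>1(1,2)]
      have sd: "seed g = g0" using dec_seed[OF g2 ge nl fD n_def[symmetric] dj \<phi>1(1,2) ordD] g by simp
      have "black g \<inter> D = B'" using blk[OF \<phi>1(1,2)] \<phi>1(3) g D_def by auto
      moreover have "g \<in> circuits (V0 \<union> (B' \<union> W')) (2 * l0 + 2 * (card B' + card W'))"
        unfolding circuits_def using dp g lg l1 nBW sg D_def by auto
      ultimately show "g \<in> T" unfolding T_def using sd D_def by simp
    qed
  qed
  have inj: "inj_on (decf g0 n D) P"
  proof (rule inj_onI)
    fix \<phi>1 \<phi>2 assume a: "\<phi>1 \<in> P" "\<phi>2 \<in> P" "decf g0 n D \<phi>1 = decf g0 n D \<phi>2"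
    have p1: "\<phi>1 ` D \<subseteq> {..<length g0 + 2 * n}" "inj_on \<phi>1 D" using a(1) Nm unfolding P_def D_def by auto
    have p2: "\<phi>2 ` D \<subseteq> {..<length g0 + 2 * n}" "inj_on \<phi>2 D" using a(2) Nm unfolding P_def D_def by auto
    have "\<forall>u\<in>D. \<phi>1 u = \<phi>2 u" using dec_inj[OF g2 ge nl fD n_def[symmetric] dj p1 p2 a(3)] .
    then show "\<phi>1 = \<phi>2" using a(1,2) unfolding P_def D_def by (auto intro: PiE_ext)
  qed
  have "card T = card P" using TP card_image[OF inj] by simp
  also have "\<dots> = (\<Prod>i\<in>{0..<card B'}. m - i) * (\<Prod>i\<in>{0..<card W'}. m - i)"
    unfolding P_def using count_P[OF fB fW BW, of m] by simp
  finally have cT: "card T = (\<Prod>i\<in>{0..<card B'}. m - i) * (\<Prod>i\<in>{0..<card W'}. m - i)" .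
  have e1: "fact (l0 + card W') * (\<Prod>i\<in>{0..<card B'}. m - i) = (fact m :: nat)"
    using prod_fact[of "card B'" m] m_def nBW by (simp add: algebra_simps)
  have e2: "fact (l0 + card B') * (\<Prod>i\<in>{0..<card W'}. m - i) = (fact m :: nat)"
    using prod_fact[of "card W'" m] m_def nBW by (simp add: algebra_simps)
  have r1: "real (\<Prod>i\<in>{0..<card B'}. m - i) = fact m / fact (l0 + card W')"
  proof -
    have "real (fact (l0 + card W')) * real (\<Prod>i\<in>{0..<card B'}. m - i) = real (fact m)"
      using arg_cong[OF e1, of real] by simp
    then show ?thesis by (simp add: field_simps)
  qed
  have r2: "real (\<Prod>i\<in>{0..<card W'}. m - i) = fact m / fact (l0 + card B')"
  proof -
    have "real (fact (l0 + card B')) * real (\<Prod>i\<in>{0..<card W'}. m - i) = real (fact m)"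
      using arg_cong[OF e2, of real] by simp
    then show ?thesis by (simp add: field_simps)
  qed
  have mm: "m = l0 + card B' + card W'" using m_def nBW by simp
  have "real (card T) = (fact m / fact (l0 + card W')) * (fact m / fact (l0 + card B'))"
    by (simp only: cT of_nat_mult r1 r2)
  also have "\<dots> = fact m ^ 2 / (fact (l0 + card B') * fact (l0 + card W'))"
    by (simp add: power2_eq_square mult.commute)
  finally show ?thesis unfolding sc mm .
qed

lemma alt_route_noleaf:
  "\<nexists>v. balanced_leaf (alt_route v1 v2 l0) v"
proof
  assume "\<exists>v. balanced_leaf (alt_route v1 v2 l0) v"
  then obtain x where bl: "balanced_leaf (alt_route v1 v2 l0) x" by blast
  define g where "g = alt_route v1 v2 l0"
  define L where "L = length g"
  have L: "L = 2 * l0" unfolding L_def g_def alt_route_def by simp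
  have gn: "g ! k = (if even k then v1 else v2)" if "k < L" for k
    using that L unfolding g_def alt_route_def by simp
  have L2: "2 < L" and c1: "count_list g x = 1" using bl L_def g_def by (auto simp: balanced_leaf_iff)
  have "x \<in> set g" using c1 by (metis count_notin zero_neq_one)
  then obtain t where t: "t < L" "g ! t = x" using L_def by (auto simp: in_set_conv_nth)
  define s where "s = (t + 2) mod L"
  have sL: "s < L" using L2 s_def by simp
  have ss: "(s = t + 2 \<and> t + 2 < L) \<or> (s = t + 2 - L \<and> L \<le> t + 2)"
  proof (cases "t + 2 < L")
    case True then show ?thesis using s_def by simp
  next
    case False
    then have "t + 2 - L < L" using t L2 by simp
    moreover have "t + 2 = (t + 2 - L) + L" using False by simp
    ultimately have "s = t + 2 - L" unfolding s_def by (metis mod_add_self2 mod_less)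
    then show ?thesis using False by simp
  qed
  have par: "even s \<longleftrightarrow> even t" using ss L by presburger
  have "s \<noteq> t" using ss L2 t by auto
  moreover have "g ! s = x" using gn[OF sL] gn[OF t(1)] t(2) par by simp
  moreover have "s < length g" "t < length g" using sL t(1) L_def by auto
  ultimately show False using count1_unique[OF c1, of s t] t by simp
qed


theorem proposition5p2:
  fixes B' W' :: "nat set" and l0 :: nat
  assumes "finite B'" and "finite W'" and "B' \<inter> W' = {}"
    and "0 \<notin> B' \<union> W'"
  shows
   "(\<forall>v1 v2. 0 < v1 \<and> 0 < v2 \<and> v1 \<noteq> v2 \<and>
       alt_route v1 v2 l0 \<in> circuits {v1, v2} (2 * l0) \<and>
       {v1, v2} \<inter> (B' \<union> W') = {} \<and> (\<forall>u \<in> B' \<union> W'. u < v1 \<and> u < v2) \<longrightarrow>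
       real (seed_count {v1, v2} (alt_route v1 v2 l0) l0 B' W') =
         fact (l0 + card B' + card W') ^ 2 / (fact (l0 + card B') * fact (l0 + card W')))
    \<and>
    (\<forall>V0 g0. finite V0 \<and> 0 \<notin> V0 \<and> g0 \<in> circuits V0 (2 * l0) \<and>
       (\<nexists>v. balanced_leaf g0 v) \<and> V0 \<inter> (B' \<union> W') = {} \<and>
       (l0 = 1 \<and> card V0 = 2 \<longrightarrow> (\<forall>v \<in> V0. \<forall>u \<in> B' \<union> W'. u < v)) \<longrightarrow>
       real (seed_count V0 g0 l0 B' W') =
         fact (l0 + card B' + card W') ^ 2 / (fact (l0 + card B') * fact (l0 + card W')))"
proof (intro conjI allI impI)
  fix v1 v2 :: nat
  assume h: "0 < v1 \<and> 0 < v2 \<and> v1 \<noteq> v2 \<and>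
       alt_route v1 v2 l0 \<in> circuits {v1, v2} (2 * l0) \<and>
       {v1, v2} \<inter> (B' \<union> W') = {} \<and> (\<forall>u \<in> B' \<union> W'. u < v1 \<and> u < v2)"
  show "real (seed_count {v1, v2} (alt_route v1 v2 l0) l0 B' W') =
         fact (l0 + card B' + card W') ^ 2 / (fact (l0 + card B') * fact (l0 + card W'))"
  proof (rule main2[OF assms(1,2,3)])
    show "alt_route v1 v2 l0 \<in> circuits {v1, v2} (2 * l0)" using h by simp
    show "\<nexists>v. balanced_leaf (alt_route v1 v2 l0) v" by (rule alt_route_noleaf)
    show "{v1, v2} \<inter> (B' \<union> W') = {}" using h by simp
    show "l0 = 1 \<and> card {v1, v2} = 2 \<longrightarrow> (\<forall>v\<in>{v1, v2}. \<forall>u\<in>B' \<union> W'. u < v)" using h by auto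
  qed
next
  fix V0 :: "nat set" and g0 :: "nat list"
  assume h: "finite V0 \<and> 0 \<notin> V0 \<and> g0 \<in> circuits V0 (2 * l0) \<and>
       (\<nexists>v. balanced_leaf g0 v) \<and> V0 \<inter> (B' \<union> W') = {} \<and>
       (l0 = 1 \<and> card V0 = 2 \<longrightarrow> (\<forall>v \<in> V0. \<forall>u \<in> B' \<union> W'. u < v))"
  show "real (seed_count V0 g0 l0 B' W') =
         fact (l0 + card B' + card W') ^ 2 / (fact (l0 + card B') * fact (l0 + card W'))"
    using main2[OF assms(1,2,3), of g0 V0] h by blast
qed

end
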